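(* Let $V$ be an $n$-dimensional complex inner product space with orthonormal basis $e_1,\ldots,e_n$, let $m\ge1$, let $\chi$ be an irreducible character of $S_m$, let $1\le k\le m$ and let $A,X^1,\ldots,X^k\in M_n(\mathbb{C})$. Then $$D^k K_{\chi}(A)(X^1,\ldots ,X^k)=\frac{\chi(\mathrm{id})}{(m-k)!}\, B^* \operatorname{miximm}_{\overline{\chi}}(A;X^1,\ldots,X^k)\, B,$$ and, for $\alpha,\beta\in\widehat\Delta$, the $(\alpha,\beta)$ entry of this matrix equals $$\frac{\chi(\mathrm{id})}{m!}\sum_{\gamma ,\delta \in \widehat{\Delta}}b_{\gamma\beta}\, \overline{b_{\delta\alpha}}\sum_{\sigma \in S_k}\sum_{\rho, \tau \in Q_{k,m}}d_{\overline\chi}\Big(X[\delta | \gamma]^{\sigma}_{\tau} [ \rho| \tau]\bigoplus_{\rho| \tau} A[\delta|\gamma](\rho | \tau)\Big).$$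
   Context: Symmetry classes: for $\sigma\in S_m$ let $P(\sigma)$ be the linear operator on $\otimes^m V$ with $P(\sigma)(v_1\otimes\cdots\otimes v_m)=v_{\sigma^{-1}(1)}\otimes\cdots\otimes v_{\sigma^{-1}(m)}$; $K_\chi=\frac{\chi(\mathrm{id})}{m!}\sum_{\sigma\in S_m}\chi(\sigma)P(\sigma)$ and $V_\chi=K_\chi(\otimes^mV)$. $\Gamma_{m,n}$ is the set of maps $\{1,\ldots,m\}\to\{1,\ldots,n\}$ with lexicographic order; $e^*_\alpha=K_\chi(e_{\alpha(1)}\otimes\cdots\otimes e_{\alpha(m)})$. $G_\alpha=\{\sigma\in S_m:\alpha\sigma=\alpha\}$, $\Omega=\{\alpha\in\Gamma_{m,n}:\sum_{\sigma\in G_\alpha}\chi(\sigma)\ne0\}$, $\Delta$ is the set of lexicographically first elements of the orbits $\{\alpha\sigma:\sigma\in S_m\}$, $\overline\Delta=\Delta\cap\Omega$, and $\widehat\Delta$ is a fixed set with $\overline\Delta\subseteq\widehat\Delta\subseteq\Omega$ such that $(e^*_\alpha)_{\alpha\in\widehat\Delta}$ (in lexicographic order) is a basis of $V_\chi$. $(v_\alpha)_{\alpha\in\widehat\Delta}$ is the orthonormal basis of $V_\chi$ obtained from it by Gram–Schmidt, and $B=(b_{\gamma\alpha})_{\gamma,\alpha\in\widehat\Delta}$ is defined by $v_\alpha=\sum_{\gamma\in\widehat\Delta}b_{\gamma\alpha}e^*_\gamma$. For $A\in M_n(\mathbb{C})$ let $T$ be the operator on $V$ with matrix $A$ in $(e_i)$;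 $K_\chi(T)$ is the restriction of $\otimes^mT$ to $V_\chi$, and $K_\chi(A)$ is the matrix indexed by $\widehat\Delta$ whose $(\alpha,\beta)$ entry is $\langle K_\chi(T)v_\beta,v_\alpha\rangle$. $D^kK_\chi(A)(X^1,\ldots,X^k)=\frac{\partial^k}{\partial t_1\cdots\partial t_k}\big|_{0}K_\chi(A+t_1X^1+\cdots+t_kX^k)$ (entrywise). Immanants: for an $m\times m$ matrix $Y$ and a character $\psi$ of $S_m$, $d_\psi(Y)=\sum_{\sigma\in S_m}\psi(\sigma)\prod_i y_{i\sigma(i)}$; $\overline\chi(\sigma)=\overline{\chi(\sigma)}$. The mixed immanant of $m\times m$ matrices $Y^1,\ldots,Y^m$ is $\Delta_\psi(Y^1,\ldots,Y^m)=\frac1{m!}\sum_{\sigma\in S_m}d_\psi$ of the matrix whose $j$-th column is the $j$-th column of $Y^{\sigma(j)}$. For $\gamma,\delta\in\Gamma_{m,n}$ and $Y\in M_n(\mathbb{C})$, $Y[\delta|\gamma]$ is the $m\times m$ matrix with $(i,j)$ entry $y_{\delta(i)\gamma(j)}$. $\operatorname{miximm}_{\overline\chi}(A;X^1,\ldots,X^k)$ is the matrix indexed by $\widehat\Delta$ whose $(\delta,\gamma)$ entry is $\Delta_{\overline\chi}(A[\delta|\gamma],\ldots,A[\delta|\gamma],X^1[\delta|\gamma],\ldots,X^k[\delta|\gamma])$ with $A[\delta|\gamma]$ repeated $m-k$ times. $Q_{k,m}$ is the set of strictly increasing maps $\{1,\ldots,k\}\to\{1,\ldots,m\}$; for $\rho\in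 Q_{k,m}$, $\bar\rho\in Q_{m-k,m}$ has complementary image. $X[\delta|\gamma]^\sigma_\tau$ (for $\sigma\in S_k$, $\tau\in Q_{k,m}$) is the $m\times m$ matrix whose $\tau(p)$-th column is the $\tau(p)$-th column of $X^{\sigma(p)}[\delta|\gamma]$ ($1\le p\le k$), other columns zero. For an $m\times m$ matrix $Y$ and $\rho,\tau\in Q_{k,m}$: $Y[\rho|\tau]$ is the $k\times k$ matrix with entries $y_{\rho(i)\tau(j)}$; $Y(\rho|\tau)$ is the $(m-k)\times(m-k)$ matrix obtained by deleting rows $\rho(\cdot)$ and columns $\tau(\cdot)$. For $P$ ($k\times k$) and $R$ ($(m-k)\times(m-k)$), $P\bigoplus_{\rho|\tau}R=(z_{ij})$ is the $m\times m$ matrix with $z_{ij}=0$ if exactly one of $i\in\operatorname{Im}\rho$, $j\in\operatorname{Im}\tau$ holds, $z_{ij}=p_{\rho^{-1}(i)\tau^{-1}(j)}$ if both hold, and $z_{ij}=r_{\bar\rho^{-1}(i)\bar\tau^{-1}(j)}$ if neither holds. *)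

theory Defs
  imports "HOL-Analysis.Analysis" "HOL-Library.List_Lexorder" "HOL-Combinatorics.Permutations"
begin

(* Conventions: 0-based indices.  V = C^n with standard basis e_0..e_{n-1} and the
   standard inner product (linear in the first argument).
   Gamma_{m,n} = lists of length m with entries < n (alpha(i) = alpha ! i),
   ordered lexicographically (List_Lexorder).
   An element of the tensor power is its coordinate function nat list => complex
   w.r.t. the basis e_alpha (only the values on Gamma_{m,n} matter). *)

definition Gam :: "nat \<Rightarrow> nat \<Rightarrow> nat list set" where
  "Gam m n = {\<alpha>. length \<alpha> = m \<and> set \<alpha> \<subseteq> {0..<n}}"

definition perms :: "nat \<Rightarrow> (nat \<Rightarrow> nat) set" where
  "perms m = {\<sigma>. \<sigma> permutes {0..<m}}"

definition compose_perm :: "nat list \<Rightarrow> (nat \<Rightarrow> nat) \<Rightarrow> nat list" where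
  "compose_perm \<alpha> \<sigma> = map (\<lambda>i. \<alpha> ! \<sigma> i) [0..<length \<alpha>]"

definition mat_mult :: "nat \<Rightarrow> (nat \<Rightarrow> nat \<Rightarrow> complex) \<Rightarrow> (nat \<Rightarrow> nat \<Rightarrow> complex) \<Rightarrow> (nat \<Rightarrow> nat \<Rightarrow> complex)" where
  "mat_mult d M N = (\<lambda>i j. \<Sum>l<d. M i l * N l j)"

definition mat_vec :: "nat \<Rightarrow> (nat \<Rightarrow> nat \<Rightarrow> complex) \<Rightarrow> (nat \<Rightarrow> complex) \<Rightarrow> (nat \<Rightarrow> complex)" where
  "mat_vec d M w = (\<lambda>i. \<Sum>j<d. M i j * w j)"

definition cvecs :: "nat \<Rightarrow> (nat \<Rightarrow> complex) set" where
  "cvecs d = {v. \<forall>i\<ge>d. v i = 0}"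

definition is_rep :: "nat \<Rightarrow> nat \<Rightarrow> ((nat \<Rightarrow> nat) \<Rightarrow> nat \<Rightarrow> nat \<Rightarrow> complex) \<Rightarrow> bool" where
  "is_rep m d \<rho> \<longleftrightarrow>
     (\<forall>\<sigma>\<in>perms m. \<forall>i j. (d \<le> i \<or> d \<le> j) \<longrightarrow> \<rho> \<sigma> i j = 0) \<and>
     \<rho> id = (\<lambda>i j. if i = j \<and> i < d then 1 else 0) \<and>
     (\<forall>\<sigma>\<in>perms m. \<forall>\<tau>\<in>perms m. \<rho> (\<sigma> \<circ> \<tau>) = mat_mult d (\<rho> \<sigma>) (\<rho> \<tau>))"

definition is_subspace :: "nat \<Rightarrow> (nat \<Rightarrow> complex) set \<Rightarrow> bool" where
  "is_subspace d W \<longleftrightarrow> W \<subseteq> cvecs d \<and> (\<lambda>_. 0) \<in> W \<and>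
     (\<forall>v\<in>W. \<forall>w\<in>W. (\<lambda>i. v i + w i) \<in> W) \<and> (\<forall>c. \<forall>v\<in>W. (\<lambda>i. c * v i) \<in> W)"

definition irreducible_rep :: "nat \<Rightarrow> nat \<Rightarrow> ((nat \<Rightarrow> nat) \<Rightarrow> nat \<Rightarrow> nat \<Rightarrow> complex) \<Rightarrow> bool" where
  "irreducible_rep m d \<rho> \<longleftrightarrow> is_rep m d \<rho> \<and> 0 < d \<and>
     (\<forall>W. is_subspace d W \<and> (\<forall>\<sigma>\<in>perms m. \<forall>w\<in>W. mat_vec d (\<rho> \<sigma>) w \<in> W)
          \<longrightarrow> W = {\<lambda>_. 0} \<or> W = cvecs d)"

definition irreducible_character :: "nat \<Rightarrow> ((nat \<Rightarrow> nat) \<Rightarrow> complex) \<Rightarrow> bool" where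
  "irreducible_character m chi \<longleftrightarrow>
     (\<exists>d \<rho>. irreducible_rep m d \<rho> \<and> (\<forall>\<sigma>\<in>perms m. chi \<sigma> = (\<Sum>i<d. \<rho> \<sigma> i i)))"

definition Kchi :: "nat \<Rightarrow> nat \<Rightarrow> ((nat \<Rightarrow> nat) \<Rightarrow> complex) \<Rightarrow> (nat list \<Rightarrow> complex) \<Rightarrow> (nat list \<Rightarrow> complex)" where
  "Kchi m n chi f = (\<lambda>\<beta>. if \<beta> \<in> Gam m n then
      chi id / of_nat (fact m) * (\<Sum>\<sigma>\<in>perms m. chi \<sigma> * f (compose_perm \<beta> \<sigma>)) else 0)"

definition Vchi :: "nat \<Rightarrow> nat \<Rightarrow> ((nat \<Rightarrow> nat) \<Rightarrow> complex) \<Rightarrow> (nat list \<Rightarrow> complex) set" where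
  "Vchi m n chi = range (Kchi m n chi)"

definition evec :: "nat list \<Rightarrow> (nat list \<Rightarrow> complex)" where
  "evec \<alpha> = (\<lambda>\<beta>. if \<beta> = \<alpha> then 1 else 0)"

definition estar :: "nat \<Rightarrow> nat \<Rightarrow> ((nat \<Rightarrow> nat) \<Rightarrow> complex) \<Rightarrow> nat list \<Rightarrow> (nat list \<Rightarrow> complex)" where
  "estar m n chi \<alpha> = Kchi m n chi (evec \<alpha>)"

definition Gstab :: "nat \<Rightarrow> nat list \<Rightarrow> (nat \<Rightarrow> nat) set" where
  "Gstab m \<alpha> = {\<sigma>\<in>perms m. compose_perm \<alpha> \<sigma> = \<alpha>}"

definition Omega :: "nat \<Rightarrow> nat \<Rightarrow> ((nat \<Rightarrow> nat) \<Rightarrow> complex) \<Rightarrow> nat list set" where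
  "Omega m n chi = {\<alpha>\<in>Gam m n. (\<Sum>\<sigma>\<in>Gstab m \<alpha>. chi \<sigma>) \<noteq> 0}"

definition Delta :: "nat \<Rightarrow> nat \<Rightarrow> nat list set" where
  "Delta m n = {\<alpha>\<in>Gam m n. \<forall>\<sigma>\<in>perms m. \<alpha> \<le> compose_perm \<alpha> \<sigma>}"

definition Deltabar :: "nat \<Rightarrow> nat \<Rightarrow> ((nat \<Rightarrow> nat) \<Rightarrow> complex) \<Rightarrow> nat list set" where
  "Deltabar m n chi = Delta m n \<inter> Omega m n chi"

definition estar_basis :: "nat \<Rightarrow> nat \<Rightarrow> ((nat \<Rightarrow> nat) \<Rightarrow> complex) \<Rightarrow> nat list set \<Rightarrow> bool" where
  "estar_basis m n chi D \<longleftrightarrow>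
     (\<forall>c. (\<forall>\<beta>. (\<Sum>\<alpha>\<in>D. c \<alpha> * estar m n chi \<alpha> \<beta>) = 0) \<longrightarrow> (\<forall>\<alpha>\<in>D. c \<alpha> = 0)) \<and>
     (\<forall>f\<in>Vchi m n chi. \<exists>c. f = (\<lambda>\<beta>. \<Sum>\<alpha>\<in>D. c \<alpha> * estar m n chi \<alpha> \<beta>))"

definition tinner :: "nat \<Rightarrow> nat \<Rightarrow> (nat list \<Rightarrow> complex) \<Rightarrow> (nat list \<Rightarrow> complex) \<Rightarrow> complex" where
  "tinner m n f g = (\<Sum>\<beta>\<in>Gam m n. f \<beta> * cnj (g \<beta>))"

definition gs_normalize :: "(('v \<Rightarrow> complex) \<Rightarrow> ('v \<Rightarrow> complex) \<Rightarrow> complex) \<Rightarrow> ('v \<Rightarrow> complex) \<Rightarrow> ('v \<Rightarrow> complex)" where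
  "gs_normalize ip u = (\<lambda>x. u x / complex_of_real (sqrt (Re (ip u u))))"

fun gs_aux :: "(('v \<Rightarrow> complex) \<Rightarrow> ('v \<Rightarrow> complex) \<Rightarrow> complex) \<Rightarrow> ('v \<Rightarrow> complex) list \<Rightarrow> ('v \<Rightarrow> complex) list \<Rightarrow> ('v \<Rightarrow> complex) list" where
  "gs_aux ip acc [] = acc"
| "gs_aux ip acc (w # ws) =
     gs_aux ip (acc @ [gs_normalize ip (\<lambda>x. w x - (\<Sum>u\<leftarrow>acc. ip w u * u x))]) ws"

definition idx :: "'a list \<Rightarrow> 'a \<Rightarrow> nat" where
  "idx xs x = (THE p. p < length xs \<and> xs ! p = x)"

definition onb :: "nat \<Rightarrow> nat \<Rightarrow> ((nat \<Rightarrow> nat) \<Rightarrow> complex) \<Rightarrow> nat list set \<Rightarrow> nat list \<Rightarrow> (nat list \<Rightarrow> complex)" where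
  "onb m n chi D \<alpha> = (let L = sorted_list_of_set D in
      gs_aux (tinner m n) [] (map (estar m n chi) L) ! idx L \<alpha>)"

definition tensor_op :: "nat \<Rightarrow> nat \<Rightarrow> (nat \<Rightarrow> nat \<Rightarrow> complex) \<Rightarrow> (nat list \<Rightarrow> complex) \<Rightarrow> (nat list \<Rightarrow> complex)" where
  "tensor_op m n A f = (\<lambda>\<beta>. if \<beta> \<in> Gam m n then
      (\<Sum>\<alpha>\<in>Gam m n. (\<Prod>i<m. A (\<beta> ! i) (\<alpha> ! i)) * f \<alpha>) else 0)"

definition KchiMat :: "nat \<Rightarrow> nat \<Rightarrow> ((nat \<Rightarrow> nat) \<Rightarrow> complex) \<Rightarrow> nat list set \<Rightarrow> (nat \<Rightarrow> nat \<Rightarrow> complex) \<Rightarrow> nat list \<Rightarrow> nat list \<Rightarrow> complex" where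
  "KchiMat m n chi D A \<alpha> \<beta> = tinner m n (tensor_op m n A (onb m n chi D \<beta>)) (onb m n chi D \<alpha>)"

definition partial :: "nat \<Rightarrow> ((nat \<Rightarrow> complex) \<Rightarrow> complex) \<Rightarrow> ((nat \<Rightarrow> complex) \<Rightarrow> complex)" where
  "partial j F = (\<lambda>t. deriv (\<lambda>s. F (t(j := s))) (t j))"

fun mpartial :: "nat \<Rightarrow> ((nat \<Rightarrow> complex) \<Rightarrow> complex) \<Rightarrow> ((nat \<Rightarrow> complex) \<Rightarrow> complex)" where
  "mpartial 0 F = F"
| "mpartial (Suc j) F = partial (Suc j) (mpartial j F)"

definition DkKchi :: "nat \<Rightarrow> nat \<Rightarrow> ((nat \<Rightarrow> nat) \<Rightarrow> complex) \<Rightarrow> nat list set \<Rightarrow> nat \<Rightarrow>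
    (nat \<Rightarrow> nat \<Rightarrow> complex) \<Rightarrow> (nat \<Rightarrow> nat \<Rightarrow> nat \<Rightarrow> complex) \<Rightarrow> nat list \<Rightarrow> nat list \<Rightarrow> complex" where
  "DkKchi m n chi D k A X \<alpha> \<beta> =
     mpartial k (\<lambda>t. KchiMat m n chi D (\<lambda>i j. A i j + (\<Sum>l=1..k. t l * X l i j)) \<alpha> \<beta>) (\<lambda>_. 0)"

definition imm :: "nat \<Rightarrow> ((nat \<Rightarrow> nat) \<Rightarrow> complex) \<Rightarrow> (nat \<Rightarrow> nat \<Rightarrow> complex) \<Rightarrow> complex" where
  "imm m \<psi> Y = (\<Sum>\<sigma>\<in>perms m. \<psi> \<sigma> * (\<Prod>i<m. Y i (\<sigma> i)))"

(* mixed immanant of Y^1..Y^m, given as Ys 0, ..., Ys (m-1) *)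
definition mix_imm :: "nat \<Rightarrow> ((nat \<Rightarrow> nat) \<Rightarrow> complex) \<Rightarrow> (nat \<Rightarrow> nat \<Rightarrow> nat \<Rightarrow> complex) \<Rightarrow> complex" where
  "mix_imm m \<psi> Ys = (\<Sum>\<sigma>\<in>perms m. imm m \<psi> (\<lambda>i j. Ys (\<sigma> j) i j)) / of_nat (fact m)"

definition submat :: "(nat \<Rightarrow> nat \<Rightarrow> complex) \<Rightarrow> nat list \<Rightarrow> nat list \<Rightarrow> (nat \<Rightarrow> nat \<Rightarrow> complex)" where
  "submat Y \<delta> \<gamma> = (\<lambda>i j. Y (\<delta> ! i) (\<gamma> ! j))"

definition cnjchar :: "((nat \<Rightarrow> nat) \<Rightarrow> complex) \<Rightarrow> ((nat \<Rightarrow> nat) \<Rightarrow> complex)" where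
  "cnjchar chi = (\<lambda>\<sigma>. cnj (chi \<sigma>))"

definition miximm :: "nat \<Rightarrow> ((nat \<Rightarrow> nat) \<Rightarrow> complex) \<Rightarrow> nat \<Rightarrow> (nat \<Rightarrow> nat \<Rightarrow> complex) \<Rightarrow>
    (nat \<Rightarrow> nat \<Rightarrow> nat \<Rightarrow> complex) \<Rightarrow> nat list \<Rightarrow> nat list \<Rightarrow> complex" where
  "miximm m \<psi> k A X \<delta> \<gamma> =
     mix_imm m \<psi> (\<lambda>l. if l < m - k then submat A \<delta> \<gamma> else submat (X (l - (m - k) + 1)) \<delta> \<gamma>)"

definition congr :: "nat list set \<Rightarrow> (nat list \<Rightarrow> nat list \<Rightarrow> complex) \<Rightarrow> (nat list \<Rightarrow> nat list \<Rightarrow> complex) \<Rightarrow> nat list \<Rightarrow> nat list \<Rightarrow> complex" where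
  "congr D B M \<alpha> \<beta> = (\<Sum>\<delta>\<in>D. \<Sum>\<gamma>\<in>D. cnj (B \<delta> \<alpha>) * M \<delta> \<gamma> * B \<gamma> \<beta>)"

definition Qkm :: "nat \<Rightarrow> nat \<Rightarrow> nat list set" where
  "Qkm k m = {\<rho>. length \<rho> = k \<and> sorted_wrt (<) \<rho> \<and> set \<rho> \<subseteq> {0..<m}}"

definition compl :: "nat \<Rightarrow> nat list \<Rightarrow> nat list" where
  "compl m \<rho> = filter (\<lambda>i. i \<notin> set \<rho>) [0..<m]"

definition Xst :: "(nat \<Rightarrow> nat \<Rightarrow> nat \<Rightarrow> complex) \<Rightarrow> nat list \<Rightarrow> nat list \<Rightarrow> (nat \<Rightarrow> nat) \<Rightarrow> nat list \<Rightarrow> (nat \<Rightarrow> nat \<Rightarrow> complex)" where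
  "Xst X \<delta> \<gamma> \<sigma> \<tau> = (\<lambda>i j. if j \<in> set \<tau> then submat (X (\<sigma> (idx \<tau> j) + 1)) \<delta> \<gamma> i j else 0)"

definition subsq :: "(nat \<Rightarrow> nat \<Rightarrow> complex) \<Rightarrow> nat list \<Rightarrow> nat list \<Rightarrow> (nat \<Rightarrow> nat \<Rightarrow> complex)" where
  "subsq Y \<rho> \<tau> = (\<lambda>i j. Y (\<rho> ! i) (\<tau> ! j))"

definition cominor :: "nat \<Rightarrow> (nat \<Rightarrow> nat \<Rightarrow> complex) \<Rightarrow> nat list \<Rightarrow> nat list \<Rightarrow> (nat \<Rightarrow> nat \<Rightarrow> complex)" where
  "cominor m Y \<rho> \<tau> = (\<lambda>i j. Y (compl m \<rho> ! i) (compl m \<tau> ! j))"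

definition blockdsum :: "nat \<Rightarrow> (nat \<Rightarrow> nat \<Rightarrow> complex) \<Rightarrow> (nat \<Rightarrow> nat \<Rightarrow> complex) \<Rightarrow> nat list \<Rightarrow> nat list \<Rightarrow> (nat \<Rightarrow> nat \<Rightarrow> complex)" where
  "blockdsum m P R \<rho> \<tau> = (\<lambda>i j.
     if i \<in> set \<rho> \<and> j \<in> set \<tau> then P (idx \<rho> i) (idx \<tau> j)
     else if i \<notin> set \<rho> \<and> j \<notin> set \<tau> then R (idx (compl m \<rho>) i) (idx (compl m \<tau>) j)
     else 0)"

end

theory Submission
  imports Defs "Jordan_Normal_Form.Spectral_Radius" "Jordan_Normal_Form.Determinant"
begin

no_notation m_inv (\<open>(\<open>open_block notation=\<open>prefix inv\<close>\<close>inv\<index> _)\<close> [81] 80)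

lemma perms_inv: "\<sigma> \<in> perms m \<Longrightarrow> inv \<sigma> \<in> perms m" by (simp add: perms_def permutes_inv)
lemma perms_comp: "\<sigma> \<in> perms m \<Longrightarrow> \<tau> \<in> perms m \<Longrightarrow> \<sigma> \<circ> \<tau> \<in> perms m" by (simp add: perms_def permutes_compose)
lemma perms_id[simp]: "id \<in> perms m" by (simp add: perms_def)
lemma finite_perms[simp]: "finite (perms m)" using finite_permutations[of "{0..<m}"] by (simp add: perms_def)
lemma perms_inv_o: "\<sigma> \<in> perms m \<Longrightarrow> inv \<sigma> \<circ> \<sigma> = id" "\<sigma> \<in> perms m \<Longrightarrow> \<sigma> \<circ> inv \<sigma> = id"
  by (auto simp: perms_def permutes_inv_o)
lemma perms_inv_inv: "\<sigma> \<in> perms m \<Longrightarrow> inv (inv \<sigma>) = \<sigma>" by (auto simp: perms_def permutes_inv_inv)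

lemma bij_comp_right: "\<tau> \<in> perms m \<Longrightarrow> bij_betw (\<lambda>\<sigma>. \<sigma> \<circ> \<tau>) (perms m) (perms m)"
  apply (rule bij_betw_byWitness[where f'="\<lambda>\<sigma>. \<sigma> \<circ> inv \<tau>"])
  by (auto simp: o_assoc[symmetric] perms_inv_o perms_comp perms_inv)

lemma bij_comp_left: "\<tau> \<in> perms m \<Longrightarrow> bij_betw (\<lambda>\<sigma>. \<tau> \<circ> \<sigma>) (perms m) (perms m)"
  apply (rule bij_betw_byWitness[where f'="\<lambda>\<sigma>. inv \<tau> \<circ> \<sigma>"])
  by (auto simp: o_assoc perms_inv_o perms_comp perms_inv)

lemma bij_inv_perms: "bij_betw inv (perms m) (perms m)"
  apply (rule bij_betw_byWitness[where f'="inv"])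
  by (auto simp: perms_inv_inv perms_inv)

lemma sum_comp_right: "\<tau> \<in> perms m \<Longrightarrow> (\<Sum>\<sigma>\<in>perms m. g (\<sigma> \<circ> \<tau>)) = (\<Sum>\<sigma>\<in>perms m. g \<sigma>)"
  using sum.reindex_bij_betw[OF bij_comp_right] by blast
lemma sum_comp_left: "\<tau> \<in> perms m \<Longrightarrow> (\<Sum>\<sigma>\<in>perms m. g (\<tau> \<circ> \<sigma>)) = (\<Sum>\<sigma>\<in>perms m. g \<sigma>)"
  using sum.reindex_bij_betw[OF bij_comp_left] by blast
lemma sum_inv_perms: "(\<Sum>\<sigma>\<in>perms m. g (inv \<sigma>)) = (\<Sum>\<sigma>\<in>perms m. g \<sigma>)"
  using sum.reindex_bij_betw[OF bij_inv_perms] by blast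

definition Imat :: "nat \<Rightarrow> nat \<Rightarrow> nat \<Rightarrow> complex" where
  "Imat d = (\<lambda>i j. if i = j \<and> i < d then 1 else 0)"
definition mtr :: "nat \<Rightarrow> (nat \<Rightarrow> nat \<Rightarrow> complex) \<Rightarrow> complex" where
  "mtr d M = (\<Sum>i<d. M i i)"

lemma mm_assoc: "mat_mult d (mat_mult d M N) P = mat_mult d M (mat_mult d N P)"
  unfolding mat_mult_def
  by (auto simp: fun_eq_iff sum_distrib_left sum_distrib_right mult.assoc intro: sum.swap)

lemma if01_mult[simp]: "(if P then 1 else 0) * (x::complex) = (if P then x else 0)"
  "x * (if P then 1 else 0) = (if P then x else 0)" by auto

lemma mm_I_left: "mat_mult d (Imat d) M = (\<lambda>i j. if i < d then M i j else 0)"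
  unfolding mat_mult_def Imat_def by (auto simp: fun_eq_iff)

lemma mm_I_right: "mat_mult d M (Imat d) = (\<lambda>i j. if j < d then M i j else 0)"
  unfolding mat_mult_def Imat_def by (auto simp: fun_eq_iff)

lemma mtr_comm: "mtr d (mat_mult d M N) = mtr d (mat_mult d N M)"
  unfolding mtr_def mat_mult_def by (subst sum.swap) (simp add: mult.commute)

lemma mtr_I_left: "mtr d (mat_mult d (Imat d) M) = mtr d M"
  unfolding mm_I_left mtr_def by simp
lemma mtr_I_right: "mtr d (mat_mult d M (Imat d)) = mtr d M"
  unfolding mm_I_right mtr_def by simp

lemma mm_sum_left: "mat_mult d (\<lambda>i j. \<Sum>s\<in>S. F s i j) N = (\<lambda>i j. \<Sum>s\<in>S. mat_mult d (F s) N i j)"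
  unfolding mat_mult_def by (auto simp: fun_eq_iff sum_distrib_right intro: sum.swap)
lemma mm_sum_right: "mat_mult d N (\<lambda>i j. \<Sum>s\<in>S. F s i j) = (\<lambda>i j. \<Sum>s\<in>S. mat_mult d N (F s) i j)"
  unfolding mat_mult_def by (auto simp: fun_eq_iff sum_distrib_left intro: sum.swap)

lemma mv_mm: "mat_vec d M (mat_vec d N g) = mat_vec d (mat_mult d M N) g"
  unfolding mat_vec_def mat_mult_def
  by (auto simp: fun_eq_iff sum_distrib_left sum_distrib_right mult.assoc intro: sum.swap)

lemma inv_comp_perms: "\<sigma> \<in> perms m \<Longrightarrow> \<tau> \<in> perms m \<Longrightarrow> inv (\<sigma> \<circ> \<tau>) = inv \<tau> \<circ> inv \<sigma>"
  by (rule o_inv_distrib) (auto simp: perms_def permutes_bij)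

lemma card_perms: "card (perms m) = fact m"
  using card_permutations[of "{0..<m}" m] by (simp add: perms_def)

locale irrep =
  fixes m d :: nat and \<rho> :: "(nat \<Rightarrow> nat) \<Rightarrow> nat \<Rightarrow> nat \<Rightarrow> complex"
  assumes irr: "irreducible_rep m d \<rho>"
begin

lemma isrep: "is_rep m d \<rho>" using irr by (simp add: irreducible_rep_def)
lemma dpos: "0 < d" using irr by (simp add: irreducible_rep_def)
lemma rep_zero: "\<sigma> \<in> perms m \<Longrightarrow> d \<le> i \<or> d \<le> j \<Longrightarrow> \<rho> \<sigma> i j = 0"
  using isrep by (auto simp: is_rep_def)
lemma rep_id: "\<rho> id = Imat d"
  using isrep by (auto simp: is_rep_def Imat_def)
lemma rep_mult: "\<sigma> \<in> perms m \<Longrightarrow> \<tau> \<in> perms m \<Longrightarrow> \<rho> (\<sigma> \<circ> \<tau>) = mat_mult d (\<rho> \<sigma>) (\<rho> \<tau>)"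
  using isrep by (auto simp: is_rep_def)
lemma rep_inv_l: "\<sigma> \<in> perms m \<Longrightarrow> mat_mult d (\<rho> (inv \<sigma>)) (\<rho> \<sigma>) = Imat d"
  using rep_mult[of "inv \<sigma>" \<sigma>] perms_inv_o[of \<sigma> m] perms_inv[of \<sigma> m] rep_id by simp
lemma rep_inv_r: "\<sigma> \<in> perms m \<Longrightarrow> mat_mult d (\<rho> \<sigma>) (\<rho> (inv \<sigma>)) = Imat d"
  using rep_mult[of \<sigma> "inv \<sigma>"] perms_inv_o[of \<sigma> m] perms_inv[of \<sigma> m] rep_id by simp

lemma scalar:
  assumes comm: "\<forall>\<tau>\<in>perms m. mat_mult d M (\<rho> \<tau>) = mat_mult d (\<rho> \<tau>) M"
  shows "\<exists>c. \<forall>i<d. \<forall>j<d. M i j = (if i = j then c else 0)"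
proof -
  define M' where "M' = mat d d (\<lambda>(i,j). M i j)"
  have M': "M' \<in> carrier_mat d d" by (simp add: M'_def)
  from spectrum_non_empty[OF M' dpos] obtain c where "c \<in> spectrum M'" by auto
  then obtain v where v: "v \<in> carrier_vec d" "v \<noteq> 0\<^sub>v d" "M' *\<^sub>v v = c \<cdot>\<^sub>v v"
    unfolding spectrum_def eigenvalue_def eigenvector_def using M' by auto
  define f where "f = (\<lambda>i. if i < d then v $ i else 0)"
  define W where "W = {g \<in> cvecs d. \<forall>i<d. mat_vec d M g i = c * g i}"
  have fW: "f \<in> W"
  proof -
    have "mat_vec d M f i = c * f i" if "i < d" for i
    proof -
      have "(M' *\<^sub>v v) $ i = c * v $ i" using v(3) that v(1) by simp
      moreover have "(M' *\<^sub>v v) $ i = (\<Sum>j<d. M i j * v $ j)"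
        using that v(1) by (simp add: M'_def scalar_prod_def lessThan_atLeast0)
      ultimately show ?thesis by (simp add: mat_vec_def f_def that)
    qed
    thus ?thesis by (simp add: W_def cvecs_def f_def)
  qed
  have fnz: "f \<noteq> (\<lambda>_. 0)"
  proof
    assume f0: "f = (\<lambda>_. 0)"
    have "v = 0\<^sub>v d"
    proof (rule eq_vecI)
      fix i assume "i < dim_vec (0\<^sub>v d :: complex vec)"
      hence "i < d" by simp
      thus "v $ i = 0\<^sub>v d $ i" using fun_cong[OF f0, of i] by (simp add: f_def)
    qed (use v(1) in simp)
    with v(2) show False by simp
  qed
  have sub: "is_subspace d W"
    unfolding is_subspace_def W_def cvecs_def mat_vec_def
    by (auto simp: sum.distrib distrib_left algebra_simps simp flip: sum_distrib_left)
  have inv: "\<forall>\<sigma>\<in>perms m. \<forall>w\<in>W. mat_vec d (\<rho> \<sigma>) w \<in> W"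
  proof (intro ballI)
    fix \<sigma> w assume \<sigma>: "\<sigma> \<in> perms m" and w: "w \<in> W"
    have "mat_vec d (\<rho> \<sigma>) w \<in> cvecs d" using rep_zero[OF \<sigma>] by (auto simp: cvecs_def mat_vec_def)
    moreover have "mat_vec d M (mat_vec d (\<rho> \<sigma>) w) i = c * mat_vec d (\<rho> \<sigma>) w i" if "i<d" for i
    proof -
      have "mat_vec d M (mat_vec d (\<rho> \<sigma>) w) i = mat_vec d (\<rho> \<sigma>) (mat_vec d M w) i"
        by (simp add: mv_mm comm \<sigma>)
      also have "\<dots> = (\<Sum>j<d. \<rho> \<sigma> i j * (c * w j))" using w by (simp add: mat_vec_def W_def)
      also have "\<dots> = c * mat_vec d (\<rho> \<sigma>) w i" by (simp add: mat_vec_def sum_distrib_left mult.left_commute)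
      finally show ?thesis .
    qed
    ultimately show "mat_vec d (\<rho> \<sigma>) w \<in> W" by (simp add: W_def)
  qed
  from irr sub inv have "W = {\<lambda>_. 0} \<or> W = cvecs d" unfolding irreducible_rep_def by blast
  with fW fnz have Weq: "W = cvecs d" by auto
  show ?thesis
  proof (intro exI allI impI)
    fix i j assume ij: "i < d" "j < d"
    define e where "e = (\<lambda>l. if l = j then (1::complex) else 0)"
    have "e \<in> W" unfolding Weq e_def cvecs_def using ij by auto
    hence "mat_vec d M e i = c * e i" using ij by (simp add: W_def)
    moreover have "mat_vec d M e i = M i j" using ij by (simp add: mat_vec_def e_def)
    ultimately show "M i j = (if i = j then c else 0)" by (simp add: e_def)
  qed
qed

lemma mm_unit: assumes "a < d" "b < d"
  shows "mat_mult d (mat_mult d R (\<lambda>x y. if x = a \<and> y = b then 1 else 0)) S i j = R i a * S b j"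
proof -
  have inner: "(\<Sum>n<d. R i n * (if n = a \<and> l = b then 1 else 0)) = (if l = b then R i a else 0)" for l
    using assms by (cases "l = b") auto
  show ?thesis unfolding mat_mult_def inner using assms by (simp add: if_distrib[of "\<lambda>x. x * _"] cong: if_cong)
qed

definition SM where "SM E = (\<lambda>i j. \<Sum>\<sigma>\<in>perms m. mat_mult d (mat_mult d (\<rho> (inv \<sigma>)) E) (\<rho> \<sigma>) i j)"

lemma SM_comm: assumes \<tau>: "\<tau> \<in> perms m" shows "mat_mult d (SM E) (\<rho> \<tau>) = mat_mult d (\<rho> \<tau>) (SM E)"
proof -
  have "mat_mult d (SM E) (\<rho> \<tau>) = (\<lambda>i j. \<Sum>\<sigma>\<in>perms m. mat_mult d (mat_mult d (\<rho> (inv \<sigma>)) E) (\<rho> (\<sigma> \<circ> \<tau>)) i j)"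
    unfolding SM_def mm_sum_left by (intro ext sum.cong refl) (simp add: mm_assoc rep_mult \<tau>)
  also have "\<dots> = (\<lambda>i j. \<Sum>\<sigma>\<in>perms m. mat_mult d (mat_mult d (\<rho> (\<tau> \<circ> inv \<sigma>)) E) (\<rho> \<sigma>) i j)"
  proof (intro ext)
    fix i j
    have "(\<Sum>\<sigma>\<in>perms m. mat_mult d (mat_mult d (\<rho> (\<tau> \<circ> inv \<sigma>)) E) (\<rho> \<sigma>) i j)
      = (\<Sum>\<sigma>\<in>perms m. mat_mult d (mat_mult d (\<rho> (\<tau> \<circ> inv (\<sigma> \<circ> \<tau>))) E) (\<rho> (\<sigma> \<circ> \<tau>)) i j)"
      by (rule sum_comp_right[OF \<tau>, symmetric])
    also have "\<dots> = (\<Sum>\<sigma>\<in>perms m. mat_mult d (mat_mult d (\<rho> (inv \<sigma>)) E) (\<rho> (\<sigma> \<circ> \<tau>)) i j)"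
      by (intro sum.cong refl) (simp add: inv_comp_perms \<tau> o_assoc perms_inv_o[OF \<tau>] perms_inv)
    finally show "(\<Sum>\<sigma>\<in>perms m. mat_mult d (mat_mult d (\<rho> (inv \<sigma>)) E) (\<rho> (\<sigma> \<circ> \<tau>)) i j) =
         (\<Sum>\<sigma>\<in>perms m. mat_mult d (mat_mult d (\<rho> (\<tau> \<circ> inv \<sigma>)) E) (\<rho> \<sigma>) i j)" by simp
  qed
  also have "\<dots> = mat_mult d (\<rho> \<tau>) (SM E)"
    unfolding SM_def mm_sum_right
    by (intro ext sum.cong refl) (simp add: mm_assoc[symmetric] rep_mult \<tau> perms_inv)
  finally show ?thesis .
qed

lemma mtr_SM: "mtr d (SM E) = fact m * mtr d E"
proof -
  have "mtr d (SM E) = (\<Sum>\<sigma>\<in>perms m. mtr d (mat_mult d (mat_mult d (\<rho> (inv \<sigma>)) E) (\<rho> \<sigma>)))"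
    unfolding SM_def mtr_def by (rule sum.swap)
  also have "\<dots> = (\<Sum>\<sigma>\<in>perms m. mtr d E)"
  proof (intro sum.cong refl)
    fix \<sigma> assume \<sigma>: "\<sigma> \<in> perms m"
    have "mtr d (mat_mult d (mat_mult d (\<rho> (inv \<sigma>)) E) (\<rho> \<sigma>)) = mtr d (mat_mult d (\<rho> \<sigma>) (mat_mult d (\<rho> (inv \<sigma>)) E))"
      by (rule mtr_comm)
    also have "\<dots> = mtr d E" by (simp add: mm_assoc[symmetric] rep_inv_r \<sigma> mtr_I_left)
    finally show "mtr d (mat_mult d (mat_mult d (\<rho> (inv \<sigma>)) E) (\<rho> \<sigma>)) = mtr d E" .
  qed
  also have "\<dots> = fact m * mtr d E" by (simp add: card_perms)
  finally show ?thesis .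
qed

lemma SM_scalar: "\<forall>i<d. \<forall>j<d. SM E i j = (if i = j then fact m * mtr d E / d else 0)"
proof -
  obtain c where l: "\<forall>i<d. \<forall>j<d. SM E i j = (if i = j then c else 0)"
    using scalar[of "SM E"] SM_comm by blast
  have "mtr d (SM E) = of_nat d * c" using l by (simp add: mtr_def)
  hence "c = fact m * mtr d E / d" using mtr_SM dpos by (simp add: field_simps)
  with l show ?thesis by simp
qed

lemma orth:
  assumes "i < d" "j < d" "a < d" "b < d"
  shows "(\<Sum>\<sigma>\<in>perms m. \<rho> (inv \<sigma>) i a * \<rho> \<sigma> b j) = (if i = j \<and> a = b then fact m / d else 0)"
proof -
  define E where "E = (\<lambda>x y. if x = a \<and> y = b then (1::complex) else 0)"
  have SMeq: "SM E i j = (\<Sum>\<sigma>\<in>perms m. \<rho> (inv \<sigma>) i a * \<rho> \<sigma> b j)"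
    unfolding SM_def E_def using assms by (simp add: mm_unit)
  have mtrE: "mtr d E = (if a = b then 1 else 0)" using assms by (simp add: mtr_def E_def)
  have s: "SM E i j = (if i = j then fact m * mtr d E / d else 0)" using SM_scalar assms by blast
  show ?thesis using s SMeq mtrE by (cases "a = b"; cases "i = j") auto
qed

end

lemma sum_swap4: "(\<Sum>i\<in>A. \<Sum>j\<in>B. \<Sum>s\<in>C. \<Sum>l\<in>D. f i j s l) = (\<Sum>s\<in>C. \<Sum>l\<in>D. \<Sum>i\<in>A. \<Sum>j\<in>B. (f i j s l::'a::comm_monoid_add))"
proof -
  have "(\<Sum>i\<in>A. \<Sum>j\<in>B. \<Sum>s\<in>C. \<Sum>l\<in>D. f i j s l) = (\<Sum>i\<in>A. \<Sum>s\<in>C. \<Sum>j\<in>B. \<Sum>l\<in>D. f i j s l)"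
    by (rule sum.cong[OF refl], rule sum.swap)
  also have "\<dots> = (\<Sum>s\<in>C. \<Sum>i\<in>A. \<Sum>j\<in>B. \<Sum>l\<in>D. f i j s l)" by (rule sum.swap)
  also have "\<dots> = (\<Sum>s\<in>C. \<Sum>i\<in>A. \<Sum>l\<in>D. \<Sum>j\<in>B. f i j s l)"
    by (intro sum.cong refl, rule sum.swap)
  also have "\<dots> = (\<Sum>s\<in>C. \<Sum>l\<in>D. \<Sum>i\<in>A. \<Sum>j\<in>B. f i j s l)"
    by (intro sum.cong refl, rule sum.swap)
  finally show ?thesis .
qed

lemma sum_swap4': "(\<Sum>s\<in>A. \<Sum>i\<in>B. \<Sum>j\<in>C. \<Sum>l\<in>D. f s i j l) = (\<Sum>i\<in>B. \<Sum>j\<in>C. \<Sum>l\<in>D. \<Sum>s\<in>A. (f s i j l::'a::comm_monoid_add))"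
proof -
  have "(\<Sum>s\<in>A. \<Sum>i\<in>B. \<Sum>j\<in>C. \<Sum>l\<in>D. f s i j l) = (\<Sum>i\<in>B. \<Sum>s\<in>A. \<Sum>j\<in>C. \<Sum>l\<in>D. f s i j l)" by (rule sum.swap)
  also have "\<dots> = (\<Sum>i\<in>B. \<Sum>j\<in>C. \<Sum>s\<in>A. \<Sum>l\<in>D. f s i j l)" by (intro sum.cong refl, rule sum.swap)
  also have "\<dots> = (\<Sum>i\<in>B. \<Sum>j\<in>C. \<Sum>l\<in>D. \<Sum>s\<in>A. f s i j l)" by (intro sum.cong refl, rule sum.swap)
  finally show ?thesis .
qed

lemma jnf_mult_index: "A' \<in> carrier_mat d d \<Longrightarrow> B' \<in> carrier_mat d d \<Longrightarrow> i < d \<Longrightarrow> j < d \<Longrightarrow>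
   (A' * B') $$ (i,j) = (\<Sum>l<d. A' $$ (i,l) * B' $$ (l,j))"
  by (simp add: scalar_prod_def lessThan_atLeast0)

lemma if_zero_mult: "(if P then a else 0) * b = (if P then a * b else (0::complex))" by simp

lemma of_real_if0: "complex_of_real (if P then a else 0) = (if P then complex_of_real a else 0)" by simp

context irrep begin

definition Rh where "Rh \<sigma> = (\<lambda>i j. cnj (\<rho> \<sigma> j i))"
definition HH where "HH = (\<lambda>i j. \<Sum>\<sigma>\<in>perms m. mat_mult d (Rh \<sigma>) (\<rho> \<sigma>) i j)"

lemma Rh_mult: "\<sigma>\<in>perms m \<Longrightarrow> \<tau>\<in>perms m \<Longrightarrow> Rh (\<sigma> \<circ> \<tau>) = mat_mult d (Rh \<tau>) (Rh \<sigma>)"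
  unfolding Rh_def by (simp add: rep_mult mat_mult_def fun_eq_iff mult.commute)

lemma HH_inv: assumes \<tau>: "\<tau> \<in> perms m" shows "mat_mult d (Rh \<tau>) (mat_mult d HH (\<rho> \<tau>)) = HH"
proof -
  have "mat_mult d (Rh \<tau>) (mat_mult d HH (\<rho> \<tau>)) = (\<lambda>i j. \<Sum>\<sigma>\<in>perms m. mat_mult d (Rh (\<sigma>\<circ>\<tau>)) (\<rho> (\<sigma>\<circ>\<tau>)) i j)"
    unfolding HH_def mm_sum_left mm_sum_right
    by (intro ext sum.cong refl) (simp add: mm_assoc Rh_mult rep_mult \<tau>)
  also have "\<dots> = HH" unfolding HH_def by (intro ext sum_comp_right[OF \<tau>])
  finally show ?thesis .
qed

lemma HH_inv2: assumes \<tau>: "\<tau> \<in> perms m" and j: "j < d"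
  shows "mat_mult d (Rh \<tau>) HH i j = mat_mult d HH (\<rho> (inv \<tau>)) i j"
proof -
  have "mat_mult d HH (\<rho> (inv \<tau>)) = mat_mult d (mat_mult d (Rh \<tau>) (mat_mult d HH (\<rho> \<tau>))) (\<rho> (inv \<tau>))"
    by (simp add: HH_inv \<tau>)
  also have "\<dots> = mat_mult d (Rh \<tau>) (mat_mult d HH (Imat d))" by (simp add: mm_assoc rep_inv_r \<tau>)
  also have "\<dots> = mat_mult d (Rh \<tau>) (\<lambda>i j. if j < d then HH i j else 0)" by (simp add: mm_I_right)
  finally show ?thesis using j by (simp add: mat_mult_def)
qed

lemma HH_zero: "d \<le> i \<or> d \<le> j \<Longrightarrow> HH i j = 0"
  unfolding HH_def mat_mult_def Rh_def by (auto simp: rep_zero perms_def intro!: sum.neutral)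

lemma HH_pos: assumes g: "g \<in> cvecs d" and h: "\<forall>i<d. mat_vec d HH g i = 0" shows "g = (\<lambda>_. 0)"
proof -
  define w where "w \<sigma> l = (\<Sum>j<d. \<rho> \<sigma> l j * g j)" for \<sigma> l
  have "(\<Sum>i<d. cnj (g i) * mat_vec d HH g i) = (\<Sum>i<d. \<Sum>j<d. \<Sum>\<sigma>\<in>perms m. \<Sum>l<d. cnj (g i) * (cnj (\<rho> \<sigma> l i) * (\<rho> \<sigma> l j * g j)))"
    by (simp add: mat_vec_def HH_def mat_mult_def Rh_def sum_distrib_left sum_distrib_right mult.assoc)
  also have "\<dots> = (\<Sum>\<sigma>\<in>perms m. \<Sum>l<d. \<Sum>i<d. \<Sum>j<d. cnj (g i) * (cnj (\<rho> \<sigma> l i) * (\<rho> \<sigma> l j * g j)))"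
    by (rule sum_swap4)
  also have "\<dots> = (\<Sum>\<sigma>\<in>perms m. \<Sum>l<d. cnj (w \<sigma> l) * w \<sigma> l)"
  proof (intro sum.cong refl)
    fix \<sigma> l
    show "(\<Sum>i<d. \<Sum>j<d. cnj (g i) * (cnj (\<rho> \<sigma> l i) * (\<rho> \<sigma> l j * g j))) = cnj (w \<sigma> l) * w \<sigma> l"
      by (simp add: w_def cnj_sum sum_product ac_simps) (rule sum.swap)
  qed
  also have "\<dots> = (\<Sum>\<sigma>\<in>perms m. \<Sum>l<d. complex_of_real ((cmod (w \<sigma> l))^2))"
    by (intro sum.cong refl) (simp only: complex_norm_square mult.commute)
  also have "\<dots> = of_real (\<Sum>\<sigma>\<in>perms m. \<Sum>l<d. (cmod (w \<sigma> l))^2)"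
    by (simp only: of_real_sum)
  finally have eq: "(\<Sum>i<d. cnj (g i) * mat_vec d HH g i) = of_real (\<Sum>\<sigma>\<in>perms m. \<Sum>l<d. (cmod (w \<sigma> l))^2)" .
  have z: "(\<Sum>i<d. cnj (g i) * mat_vec d HH g i) = 0" using h by simp
  have "complex_of_real (\<Sum>\<sigma>\<in>perms m. \<Sum>l<d. (cmod (w \<sigma> l))^2) = 0" using z eq by metis
  hence "(\<Sum>\<sigma>\<in>perms m. \<Sum>l<d. (cmod (w \<sigma> l))^2) = 0" by (simp only: of_real_eq_0_iff)
  hence "\<forall>\<sigma>\<in>perms m. (\<Sum>l<d. (cmod (w \<sigma> l))^2) = 0"
    by (subst (asm) sum_nonneg_eq_0_iff) (auto intro: sum_nonneg)
  hence "(\<Sum>l<d. (cmod (w id l))^2) = 0" by simp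
  hence "\<forall>l<d. w id l = 0" by (subst (asm) sum_nonneg_eq_0_iff) auto
  moreover have "l < d \<Longrightarrow> w id l = g l" for l by (simp add: w_def rep_id Imat_def)
  ultimately have "\<forall>l<d. g l = 0" by auto
  moreover have "\<forall>l\<ge>d. g l = 0" using g by (simp add: cvecs_def)
  ultimately show ?thesis by (metis not_less)
qed

lemma HH_invertible: "\<exists>G. mat_mult d G HH = Imat d \<and> mat_mult d HH G = Imat d"
proof -
  define H' where "H' = mat d d (\<lambda>(i,j). HH i j)"
  have H': "H' \<in> carrier_mat d d" by (simp add: H'_def)
  have "Determinant.det H' \<noteq> 0"
  proof
    assume "Determinant.det H' = 0"
    then obtain v where v: "v \<in> carrier_vec d" "v \<noteq> 0\<^sub>v d" "H' *\<^sub>v v = 0\<^sub>v d"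
      using det_0_iff_vec_prod_zero[OF H'] by auto
    define g where "g = (\<lambda>i. if i < d then v $ i else 0)"
    have "g \<in> cvecs d" by (simp add: g_def cvecs_def)
    moreover have "\<forall>i<d. mat_vec d HH g i = 0"
    proof (intro allI impI)
      fix i assume i: "i < d"
      have "(H' *\<^sub>v v) $ i = 0" using v(3) i by simp
      moreover have "(H' *\<^sub>v v) $ i = mat_vec d HH g i"
        using i v(1) by (simp add: H'_def scalar_prod_def lessThan_atLeast0 mat_vec_def g_def)
      ultimately show "mat_vec d HH g i = 0" by simp
    qed
    ultimately have g0: "g = (\<lambda>_. 0)" by (rule HH_pos)
    have "v = 0\<^sub>v d"
    proof (rule eq_vecI)
      fix i assume "i < dim_vec (0\<^sub>v d :: complex vec)"
      hence "i < d" by simp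
      thus "v $ i = 0\<^sub>v d $ i" using fun_cong[OF g0, of i] by (simp add: g_def)
    qed (use v(1) in simp)
    with v(2) show False by simp
  qed
  from det_non_zero_imp_unit[OF H' this, of "()"] obtain G' where
    G': "G' \<in> carrier_mat d d" "G' * H' = 1\<^sub>m d" "H' * G' = 1\<^sub>m d"
    unfolding Units_def by (auto simp: ring_mat_simps)
  define G where "G = (\<lambda>i j. if i < d \<and> j < d then G' $$ (i,j) else 0)"
  have 1: "mat_mult d G HH = Imat d"
  proof (intro ext)
    fix i j
    show "mat_mult d G HH i j = Imat d i j"
    proof (cases "i < d \<and> j < d")
      case True
      have "(G' * H') $$ (i,j) = (\<Sum>l<d. G' $$ (i,l) * H' $$ (l,j))"
        using True G'(1) H' by (intro jnf_mult_index) auto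
      also have "\<dots> = mat_mult d G HH i j" using True by (simp add: mat_mult_def G_def H'_def)
      finally have "(G' * H') $$ (i,j) = mat_mult d G HH i j" .
      thus ?thesis using G'(2) True by (simp add: Imat_def)
    next
      case False thus ?thesis by (auto simp: mat_mult_def G_def Imat_def HH_zero)
    qed
  qed
  have 2: "mat_mult d HH G = Imat d"
  proof (intro ext)
    fix i j
    show "mat_mult d HH G i j = Imat d i j"
    proof (cases "i < d \<and> j < d")
      case True
      have "(H' * G') $$ (i,j) = (\<Sum>l<d. H' $$ (i,l) * G' $$ (l,j))"
        using True G'(1) H' by (intro jnf_mult_index) auto
      also have "\<dots> = mat_mult d HH G i j" using True by (simp add: mat_mult_def G_def H'_def)
      finally have "(H' * G') $$ (i,j) = mat_mult d HH G i j" .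
      thus ?thesis using G'(3) True by (simp add: Imat_def)
    next
      case False thus ?thesis by (auto simp: mat_mult_def G_def Imat_def HH_zero)
    qed
  qed
  from 1 2 show ?thesis by blast
qed

lemma mtr_cong: "(\<And>l i. i < d \<Longrightarrow> Y l i = Y' l i) \<Longrightarrow> mtr d (mat_mult d G Y) = mtr d (mat_mult d G Y')"
  by (simp add: mtr_def mat_mult_def)

lemma tr_inv: assumes \<tau>: "\<tau> \<in> perms m" shows "mtr d (\<rho> (inv \<tau>)) = cnj (mtr d (\<rho> \<tau>))"
proof -
  obtain G where G: "mat_mult d G HH = Imat d" "mat_mult d HH G = Imat d" using HH_invertible by blast
  have "mtr d (\<rho> (inv \<tau>)) = mtr d (mat_mult d (mat_mult d G HH) (\<rho> (inv \<tau>)))" by (simp add: G mtr_I_left)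
  also have "\<dots> = mtr d (mat_mult d G (mat_mult d HH (\<rho> (inv \<tau>))))" by (simp add: mm_assoc)
  also have "\<dots> = mtr d (mat_mult d G (mat_mult d (Rh \<tau>) HH))" by (rule mtr_cong) (simp add: HH_inv2 \<tau>)
  also have "\<dots> = mtr d (mat_mult d (mat_mult d (Rh \<tau>) HH) G)" by (rule mtr_comm)
  also have "\<dots> = mtr d (Rh \<tau>)" by (simp add: mm_assoc G mtr_I_right)
  also have "\<dots> = cnj (mtr d (\<rho> \<tau>))" by (simp add: mtr_def Rh_def cnj_sum)
  finally show ?thesis .
qed

lemma tr_conv: assumes \<tau>: "\<tau> \<in> perms m"
  shows "(\<Sum>\<sigma>\<in>perms m. mtr d (\<rho> (inv \<sigma>)) * mtr d (\<rho> (\<sigma> \<circ> \<tau>))) = fact m / d * mtr d (\<rho> \<tau>)"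
proof -
  have "(\<Sum>\<sigma>\<in>perms m. mtr d (\<rho> (inv \<sigma>)) * mtr d (\<rho> (\<sigma> \<circ> \<tau>)))
      = (\<Sum>\<sigma>\<in>perms m. \<Sum>j<d. \<Sum>l<d. \<Sum>i<d. \<rho> (inv \<sigma>) i i * (\<rho> \<sigma> j l * \<rho> \<tau> l j))"
    by (intro sum.cong refl) (simp add: mtr_def rep_mult \<tau> mat_mult_def sum_distrib_left sum_distrib_right mult.assoc)
  also have "\<dots> = (\<Sum>j<d. \<Sum>l<d. \<Sum>i<d. \<Sum>\<sigma>\<in>perms m. \<rho> (inv \<sigma>) i i * (\<rho> \<sigma> j l * \<rho> \<tau> l j))"
    by (rule sum_swap4')
  also have "\<dots> = (\<Sum>j<d. \<Sum>l<d. \<Sum>i<d. (if i = l \<and> i = j then fact m / d else 0) * \<rho> \<tau> l j)"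
    by (intro sum.cong refl) (simp add: mult.assoc[symmetric] sum_distrib_right[symmetric] orth)
  also have "\<dots> = (\<Sum>j<d. fact m / d * \<rho> \<tau> j j)"
  proof (intro sum.cong refl)
    fix j assume j: "j \<in> {..<d}"
    have inner: "(\<Sum>i<d. (if i = l \<and> i = j then fact m / d else 0) * \<rho> \<tau> l j) = (if l = j then fact m / d * \<rho> \<tau> j j else 0)" if "l < d" for l
      using j that by (cases "l = j") (auto simp: if_zero_mult of_real_if0)
    show "(\<Sum>l<d. \<Sum>i<d. (if i = l \<and> i = j then fact m / d else 0) * \<rho> \<tau> l j) = fact m / d * \<rho> \<tau> j j"
      using j by (simp add: inner)
  qed
  also have "\<dots> = fact m / d * mtr d (\<rho> \<tau>)" by (simp add: mtr_def sum_distrib_left)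
  finally show ?thesis .
qed

end

lemma char_facts:
  assumes "irreducible_character m chi"
  shows "\<exists>d>0. chi id = of_nat d \<and> (\<forall>\<sigma>\<in>perms m. chi (inv \<sigma>) = cnj (chi \<sigma>)) \<and>
    (\<forall>\<tau>\<in>perms m. (\<Sum>\<sigma>\<in>perms m. chi (inv \<sigma>) * chi (\<sigma> \<circ> \<tau>)) = fact m / of_nat d * chi \<tau>)"
proof -
  obtain d \<rho> where ir: "irreducible_rep m d \<rho>" and ch: "\<forall>\<sigma>\<in>perms m. chi \<sigma> = mtr d (\<rho> \<sigma>)"
    using assms unfolding irreducible_character_def mtr_def by blast
  interpret irrep m d \<rho> by (rule irrep.intro[OF ir])
  have "chi id = of_nat d" using ch by (simp add: rep_id mtr_def Imat_def)
  moreover have "\<forall>\<sigma>\<in>perms m. chi (inv \<sigma>) = cnj (chi \<sigma>)" using ch tr_inv perms_inv by simp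
  moreover have "\<forall>\<tau>\<in>perms m. (\<Sum>\<sigma>\<in>perms m. chi (inv \<sigma>) * chi (\<sigma> \<circ> \<tau>)) = fact m / of_nat d * chi \<tau>"
    using ch tr_conv perms_inv perms_comp by simp
  ultimately show ?thesis using dpos by blast
qed

lemma compose_perm_len[simp]: "length (compose_perm \<alpha> \<sigma>) = length \<alpha>"
  by (simp add: compose_perm_def)
lemma compose_perm_nth[simp]: "i < length \<alpha> \<Longrightarrow> compose_perm \<alpha> \<sigma> ! i = \<alpha> ! \<sigma> i"
  by (simp add: compose_perm_def)

lemma perms_lt: "\<sigma> \<in> perms m \<Longrightarrow> i < m \<Longrightarrow> \<sigma> i < m"
  unfolding perms_def using permutes_in_image[of \<sigma> "{0..<m}" i] by auto

lemma compose_perm_Gam: "\<alpha> \<in> Gam m n \<Longrightarrow> \<sigma> \<in> perms m \<Longrightarrow> compose_perm \<alpha> \<sigma> \<in> Gam m n"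
  unfolding Gam_def by (auto simp: compose_perm_def perms_lt)

lemma compose_perm_eq_iff:
  assumes \<beta>: "length \<beta> = m" and \<gamma>: "length \<gamma> = m" and \<sigma>: "\<sigma> \<in> perms m"
  shows "(compose_perm \<beta> \<sigma> = \<gamma>) = (\<beta> = compose_perm \<gamma> (inv \<sigma>))"
proof
  assume h: "compose_perm \<beta> \<sigma> = \<gamma>"
  show "\<beta> = compose_perm \<gamma> (inv \<sigma>)"
  proof (rule nth_equalityI)
    fix i assume i: "i < length \<beta>"
    have "compose_perm \<gamma> (inv \<sigma>) ! i = \<gamma> ! inv \<sigma> i" using i \<beta> \<gamma> by simp
    also have "\<dots> = \<beta> ! \<sigma> (inv \<sigma> i)" using h[symmetric] i \<beta> perms_lt[OF perms_inv[OF \<sigma>]] by simp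
    also have "\<dots> = \<beta> ! i" using \<sigma> by (simp add: perms_def permutes_inverses)
    finally show "\<beta> ! i = compose_perm \<gamma> (inv \<sigma>) ! i" by simp
  qed (use \<beta> \<gamma> in simp)
next
  assume h: "\<beta> = compose_perm \<gamma> (inv \<sigma>)"
  show "compose_perm \<beta> \<sigma> = \<gamma>"
  proof (rule nth_equalityI)
    fix i assume i: "i < length (compose_perm \<beta> \<sigma>)"
    hence i': "i < m" using \<beta> by simp
    have "compose_perm \<beta> \<sigma> ! i = \<beta> ! \<sigma> i" using i by simp
    also have "\<dots> = \<gamma> ! inv \<sigma> (\<sigma> i)" using h i' \<gamma> perms_lt[OF \<sigma>] by simp
    also have "\<dots> = \<gamma> ! i" using \<sigma> by (simp add: perms_def permutes_inverses)
    finally show "compose_perm \<beta> \<sigma> ! i = \<gamma> ! i" .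
  qed (use \<beta> \<gamma> in simp)
qed

definition cc :: "nat \<Rightarrow> ((nat \<Rightarrow> nat) \<Rightarrow> complex) \<Rightarrow> complex" where
  "cc m chi = chi id / of_nat (fact m)"

lemma estar_eq: "estar m n chi \<gamma> \<beta> = (if \<beta> \<in> Gam m n then
   cc m chi * (\<Sum>\<sigma>\<in>perms m. chi \<sigma> * (if compose_perm \<beta> \<sigma> = \<gamma> then 1 else 0)) else 0)"
  by (simp add: estar_def Kchi_def evec_def cc_def)

lemma sum_estar:
  assumes \<gamma>: "\<gamma> \<in> Gam m n"
  shows "(\<Sum>\<beta>\<in>Gam m n. f \<beta> * estar m n chi \<gamma> \<beta>) = cc m chi * (\<Sum>\<sigma>\<in>perms m. chi \<sigma> * f (compose_perm \<gamma> (inv \<sigma>)))"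
proof -
  have "(\<Sum>\<beta>\<in>Gam m n. f \<beta> * estar m n chi \<gamma> \<beta>)
     = cc m chi * (\<Sum>\<sigma>\<in>perms m. chi \<sigma> * (\<Sum>\<beta>\<in>Gam m n. if \<beta> = compose_perm \<gamma> (inv \<sigma>) then f \<beta> else 0))"
  proof -
    have "(\<Sum>\<beta>\<in>Gam m n. f \<beta> * estar m n chi \<gamma> \<beta>)
       = (\<Sum>\<beta>\<in>Gam m n. \<Sum>\<sigma>\<in>perms m. cc m chi * (chi \<sigma> * (if \<beta> = compose_perm \<gamma> (inv \<sigma>) then f \<beta> else 0)))"
    proof (intro sum.cong refl)
      fix \<beta> assume b: "\<beta> \<in> Gam m n"
      have l: "length \<beta> = m" "length \<gamma> = m" using b \<gamma> by (auto simp: Gam_def)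
      show "f \<beta> * estar m n chi \<gamma> \<beta> = (\<Sum>\<sigma>\<in>perms m. cc m chi * (chi \<sigma> * (if \<beta> = compose_perm \<gamma> (inv \<sigma>) then f \<beta> else 0)))"
        using b by (simp add: estar_eq sum_distrib_left compose_perm_eq_iff[OF l] ac_simps cong: sum.cong) (intro sum.cong refl; simp)
    qed
    also have "\<dots> = (\<Sum>\<sigma>\<in>perms m. \<Sum>\<beta>\<in>Gam m n. cc m chi * (chi \<sigma> * (if \<beta> = compose_perm \<gamma> (inv \<sigma>) then f \<beta> else 0)))"
      by (rule sum.swap)
    finally show ?thesis by (simp add: sum_distrib_left)
  qed
  also have "\<dots> = cc m chi * (\<Sum>\<sigma>\<in>perms m. chi \<sigma> * f (compose_perm \<gamma> (inv \<sigma>)))"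
  proof -
    have fin: "finite (Gam m n)"
    proof -
      have "Gam m n \<subseteq> {xs. set xs \<subseteq> {0..<n} \<and> length xs = m}" by (auto simp: Gam_def)
      thus ?thesis using finite_lists_length_eq[of "{0..<n}" m] by (auto intro: finite_subset)
    qed
    show ?thesis using fin compose_perm_Gam[OF \<gamma> perms_inv]
      by (intro arg_cong[where f="\<lambda>x. cc m chi * x"] sum.cong refl) (simp add: sum.delta')
  qed
  finally show ?thesis .
qed

lemma finite_Gam[simp]: "finite (Gam m n)"
proof -
  have "Gam m n \<subseteq> {xs. set xs \<subseteq> {0..<n} \<and> length xs = m}" by (auto simp: Gam_def)
  thus ?thesis using finite_lists_length_eq[of "{0..<n}" m] by (auto intro: finite_subset)
qed

lemma sum_estar_cnj:
  assumes \<gamma>: "\<gamma> \<in> Gam m n"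
  shows "(\<Sum>\<beta>\<in>Gam m n. f \<beta> * cnj (estar m n chi \<gamma> \<beta>)) = cnj (cc m chi) * (\<Sum>\<sigma>\<in>perms m. cnj (chi \<sigma>) * f (compose_perm \<gamma> (inv \<sigma>)))"
proof -
  have "(\<Sum>\<beta>\<in>Gam m n. cnj (f \<beta>) * estar m n chi \<gamma> \<beta>) = cc m chi * (\<Sum>\<sigma>\<in>perms m. chi \<sigma> * cnj (f (compose_perm \<gamma> (inv \<sigma>))))"
    by (rule sum_estar[OF \<gamma>])
  hence "cnj (\<Sum>\<beta>\<in>Gam m n. cnj (f \<beta>) * estar m n chi \<gamma> \<beta>) = cnj (cc m chi * (\<Sum>\<sigma>\<in>perms m. chi \<sigma> * cnj (f (compose_perm \<gamma> (inv \<sigma>)))))"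
    by simp
  thus ?thesis by (simp add: cnj_sum)
qed

lemma T_formula:
  assumes ch: "irreducible_character m chi" and \<gamma>: "\<gamma> \<in> Gam m n" and \<delta>: "\<delta> \<in> Gam m n"
  shows "tinner m n (tensor_op m n A (estar m n chi \<gamma>)) (estar m n chi \<delta>) = cc m chi * imm m (cnjchar chi) (submat A \<delta> \<gamma>)"
proof -
  obtain d where d: "d > 0" "chi id = of_nat d" and cinv: "\<forall>\<sigma>\<in>perms m. chi (inv \<sigma>) = cnj (chi \<sigma>)"
     and conv: "\<forall>\<tau>\<in>perms m. (\<Sum>\<sigma>\<in>perms m. chi (inv \<sigma>) * chi (\<sigma> \<circ> \<tau>)) = fact m / of_nat d * chi \<tau>"
    using char_facts[OF ch] by blast
  have lg: "length \<gamma> = m" and ld: "length \<delta> = m" using \<gamma> \<delta> by (auto simp: Gam_def)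
  define P where "P \<beta> \<pi> = (\<Prod>i<m. A (\<beta> ! i) (compose_perm \<gamma> (inv \<pi>) ! i))" for \<beta> \<pi>
  define Q where "Q \<nu> = (\<Prod>j<m. A (\<delta> ! j) (\<gamma> ! \<nu> j))" for \<nu>
  have t1: "tensor_op m n A (estar m n chi \<gamma>) \<beta> = cc m chi * (\<Sum>\<pi>\<in>perms m. chi \<pi> * P \<beta> \<pi>)" if "\<beta> \<in> Gam m n" for \<beta>
    using that unfolding tensor_op_def P_def by (simp add: sum_estar[OF \<gamma>])
  have ccr: "cnj (cc m chi) = cc m chi" by (simp add: cc_def d)
  have PQ: "P (compose_perm \<delta> (inv \<sigma>)) \<pi> = Q (inv \<pi> \<circ> \<sigma>)" if \<sigma>: "\<sigma> \<in> perms m" and \<pi>: "\<pi> \<in> perms m" for \<sigma> \<pi>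
  proof -
    have "P (compose_perm \<delta> (inv \<sigma>)) \<pi> = (\<Prod>i<m. A (\<delta> ! inv \<sigma> i) (\<gamma> ! inv \<pi> i))"
      unfolding P_def using lg ld by (intro prod.cong refl) simp
    also have "\<dots> = (\<Prod>j<m. A (\<delta> ! inv \<sigma> (\<sigma> j)) (\<gamma> ! inv \<pi> (\<sigma> j)))"
      using prod.permute[of \<sigma> "{..<m}" "\<lambda>i. A (\<delta> ! inv \<sigma> i) (\<gamma> ! inv \<pi> i)"] \<sigma>
      by (simp add: perms_def lessThan_atLeast0)
    also have "\<dots> = Q (inv \<pi> \<circ> \<sigma>)" unfolding Q_def using \<sigma> by (simp add: perms_def permutes_inverses)
    finally show ?thesis .
  qed
  have reidx: "(\<Sum>\<pi>\<in>perms m. chi \<pi> * Q (inv \<pi> \<circ> \<sigma>)) = (\<Sum>\<nu>\<in>perms m. chi (\<sigma> \<circ> inv \<nu>) * Q \<nu>)"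
    if \<sigma>: "\<sigma> \<in> perms m" for \<sigma>
  proof -
    have "(\<Sum>\<pi>\<in>perms m. chi \<pi> * Q (inv \<pi> \<circ> \<sigma>)) = (\<Sum>\<nu>\<in>perms m. chi (\<sigma> \<circ> \<nu>) * Q (inv (\<sigma> \<circ> \<nu>) \<circ> \<sigma>))"
      by (rule sum_comp_left[OF \<sigma>, symmetric])
    also have "\<dots> = (\<Sum>\<nu>\<in>perms m. chi (\<sigma> \<circ> inv \<nu>) * Q (inv (\<sigma> \<circ> inv \<nu>) \<circ> \<sigma>))"
      by (rule sum_inv_perms[symmetric])
    also have "\<dots> = (\<Sum>\<nu>\<in>perms m. chi (\<sigma> \<circ> inv \<nu>) * Q \<nu>)"
    proof (intro sum.cong refl)
      fix \<nu> assume \<nu>: "\<nu> \<in> perms m"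
      have "inv (\<sigma> \<circ> inv \<nu>) \<circ> \<sigma> = \<nu>"
        using \<sigma> \<nu> by (simp add: inv_comp_perms perms_inv perms_inv_inv o_assoc[symmetric] perms_inv_o)
      thus "chi (\<sigma> \<circ> inv \<nu>) * Q (inv (\<sigma> \<circ> inv \<nu>) \<circ> \<sigma>) = chi (\<sigma> \<circ> inv \<nu>) * Q \<nu>" by simp
    qed
    finally show ?thesis .
  qed
  have "tinner m n (tensor_op m n A (estar m n chi \<gamma>)) (estar m n chi \<delta>)
      = (\<Sum>\<beta>\<in>Gam m n. (cc m chi * (\<Sum>\<pi>\<in>perms m. chi \<pi> * P \<beta> \<pi>)) * cnj (estar m n chi \<delta> \<beta>))"
    unfolding tinner_def by (intro sum.cong refl) (simp add: t1)
  also have "\<dots> = cc m chi * (\<Sum>\<sigma>\<in>perms m. cnj (chi \<sigma>) * (cc m chi * (\<Sum>\<pi>\<in>perms m. chi \<pi> * P (compose_perm \<delta> (inv \<sigma>)) \<pi>)))"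
    by (simp add: sum_estar_cnj[OF \<delta>] ccr)
  also have "\<dots> = cc m chi * cc m chi * (\<Sum>\<sigma>\<in>perms m. cnj (chi \<sigma>) * (\<Sum>\<nu>\<in>perms m. chi (\<sigma> \<circ> inv \<nu>) * Q \<nu>))"
    by (simp add: PQ reidx sum_distrib_left ac_simps cong: sum.cong)
  also have "\<dots> = cc m chi * cc m chi * (\<Sum>\<nu>\<in>perms m. (\<Sum>\<sigma>\<in>perms m. chi (inv \<sigma>) * chi (\<sigma> \<circ> inv \<nu>)) * Q \<nu>)"
    by (simp add: cinv sum_distrib_left sum_distrib_right ac_simps cong: sum.cong) (rule sum.swap)
  also have "\<dots> = cc m chi * cc m chi * (\<Sum>\<nu>\<in>perms m. (fact m / of_nat d * cnj (chi \<nu>)) * Q \<nu>)"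
  proof (intro arg_cong[where f="\<lambda>x. cc m chi * cc m chi * x"] sum.cong refl)
    fix \<nu> assume \<nu>: "\<nu> \<in> perms m"
    show "(\<Sum>\<sigma>\<in>perms m. chi (inv \<sigma>) * chi (\<sigma> \<circ> inv \<nu>)) * Q \<nu> = fact m / of_nat d * cnj (chi \<nu>) * Q \<nu>"
      using conv[rule_format, OF perms_inv[OF \<nu>]] cinv[rule_format, OF \<nu>] by simp
  qed
  also have "\<dots> = cc m chi * (\<Sum>\<nu>\<in>perms m. cnj (chi \<nu>) * Q \<nu>)"
    using d by (simp add: cc_def sum_distrib_left ac_simps)
  also have "\<dots> = cc m chi * imm m (cnjchar chi) (submat A \<delta> \<gamma>)"
    by (simp add: imm_def cnjchar_def Q_def submat_def)
  finally show ?thesis .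
qed

definition Inj :: "nat \<Rightarrow> nat \<Rightarrow> nat list set" where
  "Inj j m = {f. length f = j \<and> distinct f \<and> set f \<subseteq> {..<m}}"

lemma finite_Inj[simp]: "finite (Inj j m)"
proof -
  have "Inj j m \<subseteq> {xs. set xs \<subseteq> {..<m} \<and> length xs = j}" by (auto simp: Inj_def)
  thus ?thesis using finite_lists_length_eq[of "{..<m}" j] by (auto intro: finite_subset)
qed

lemma Inj_0[simp]: "Inj 0 m = {[]}" by (auto simp: Inj_def)

lemma Inj_Suc: "Inj (Suc j) m = (\<lambda>(f,i). f @ [i]) ` (SIGMA f:Inj j m. {..<m} - set f)"
proof
  show "Inj (Suc j) m \<subseteq> (\<lambda>(f,i). f @ [i]) ` (SIGMA f:Inj j m. {..<m} - set f)"
  proof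
    fix g assume g: "g \<in> Inj (Suc j) m"
    then obtain f i where fi: "g = f @ [i]" by (cases g rule: rev_cases) (auto simp: Inj_def)
    with g have "(f,i) \<in> (SIGMA f:Inj j m. {..<m} - set f)" by (auto simp: Inj_def)
    with fi show "g \<in> (\<lambda>(f,i). f @ [i]) ` (SIGMA f:Inj j m. {..<m} - set f)" by force
  qed
qed (auto simp: Inj_def)

lemma sum_Inj_Suc: "(\<Sum>g\<in>Inj (Suc j) m. h g) = (\<Sum>f\<in>Inj j m. \<Sum>i\<in>{..<m} - set f. h (f @ [i]))"
proof -
  have inj: "inj_on (\<lambda>(f,i). f @ [i]) (SIGMA f:Inj j m. {..<m} - set f)"
    by (auto simp: inj_on_def)
  have "(\<Sum>g\<in>Inj (Suc j) m. h g) = (\<Sum>(f,i)\<in>(SIGMA f:Inj j m. {..<m} - set f). h (f @ [i]))"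
    unfolding Inj_Suc by (subst sum.reindex[OF inj]) (simp add: case_prod_unfold)
  also have "\<dots> = (\<Sum>f\<in>Inj j m. \<Sum>i\<in>{..<m} - set f. h (f @ [i]))"
    by (rule sum.Sigma[symmetric]) auto
  finally show ?thesis .
qed

lemma deriv_Lf:
  fixes t x :: "nat \<Rightarrow> complex" and J k :: nat
  assumes J: "J \<in> {1..k}"
  shows "((\<lambda>s. a + (\<Sum>l=1..k. (t(J:=s)) l * x l)) has_field_derivative x J) (at z)"
proof -
  have "((\<lambda>s. a + (\<Sum>l=1..k. (t(J:=s)) l * x l)) has_field_derivative 0 + (\<Sum>l=1..k. if l = J then x l else 0)) (at z)"
  proof (intro derivative_intros DERIV_sum)
    fix l assume "l \<in> {1..k}"
    show "((\<lambda>s. (t(J:=s)) l * x l) has_field_derivative (if l = J then x l else 0)) (at z)"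
    proof (cases "l = J")
      case True thus ?thesis by (auto intro!: derivative_eq_intros)
    next
      case False thus ?thesis by (auto intro!: derivative_eq_intros)
    qed
  qed
  moreover have "(\<Sum>l=1..k. if l = J then x l else 0) = x J" by (subst sum.delta) (use J in auto)
  ultimately show ?thesis by simp
qed

lemma mpartial_formula:
  fixes P :: "'p set" and w :: "'p \<Rightarrow> complex" and a :: "'p \<Rightarrow> nat \<Rightarrow> complex"
    and x :: "'p \<Rightarrow> nat \<Rightarrow> nat \<Rightarrow> complex"
  assumes fin: "finite P"
  shows "j \<le> k \<Longrightarrow> mpartial j (\<lambda>t. \<Sum>p\<in>P. w p * (\<Prod>i<m. a p i + (\<Sum>l=1..k. t l * x p l i)))
    = (\<lambda>t. \<Sum>p\<in>P. w p * (\<Sum>f\<in>Inj j m. (\<Prod>l<j. x p (Suc l) (f ! l)) *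
                 (\<Prod>i\<in>{..<m} - set f. a p i + (\<Sum>l=1..k. t l * x p l i))))"
proof (induction j)
  case 0 thus ?case by simp
next
  case (Suc j)
  define Lf where "Lf p t i = a p i + (\<Sum>l=1..k. t l * x p l i)" for p t i
  have IH: "mpartial j (\<lambda>t. \<Sum>p\<in>P. w p * (\<Prod>i<m. Lf p t i))
    = (\<lambda>t. \<Sum>p\<in>P. w p * (\<Sum>f\<in>Inj j m. (\<Prod>l<j. x p (Suc l) (f ! l)) * (\<Prod>i\<in>{..<m} - set f. Lf p t i)))"
    using Suc by (simp add: Lf_def)
  have J: "Suc j \<in> {1..k}" using Suc.prems by simp
  have "mpartial (Suc j) (\<lambda>t. \<Sum>p\<in>P. w p * (\<Prod>i<m. Lf p t i))
    = (\<lambda>t. \<Sum>p\<in>P. w p * (\<Sum>g\<in>Inj (Suc j) m. (\<Prod>l<Suc j. x p (Suc l) (g ! l)) * (\<Prod>i\<in>{..<m} - set g. Lf p t i)))"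
  proof (rule ext)
    fix t
    have "mpartial (Suc j) (\<lambda>t. \<Sum>p\<in>P. w p * (\<Prod>i<m. Lf p t i)) t
       = deriv (\<lambda>s. \<Sum>p\<in>P. w p * (\<Sum>f\<in>Inj j m. (\<Prod>l<j. x p (Suc l) (f ! l)) * (\<Prod>i\<in>{..<m} - set f. Lf p (t(Suc j := s)) i))) (t (Suc j))"
      by (simp add: partial_def IH)
    also have "\<dots> = (\<Sum>p\<in>P. w p * (\<Sum>f\<in>Inj j m. (\<Prod>l<j. x p (Suc l) (f ! l)) *
        (\<Sum>i\<in>{..<m} - set f. x p (Suc j) i * (\<Prod>y\<in>({..<m} - set f) - {i}. Lf p t y))))"
    proof (rule DERIV_imp_deriv)
      have d1: "((\<lambda>s. Lf p (t(Suc j := s)) i) has_field_derivative x p (Suc j) i) (at (t (Suc j)))" for p i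
        unfolding Lf_def by (rule deriv_Lf[OF J])
      have "((\<lambda>s. \<Prod>i\<in>{..<m} - set f. Lf p (t(Suc j := s)) i) has_field_derivative
          (\<Sum>i\<in>{..<m} - set f. x p (Suc j) i * (\<Prod>y\<in>({..<m} - set f) - {i}. Lf p (t(Suc j := t (Suc j))) y))) (at (t (Suc j)))" for p f
        by (rule has_field_derivative_prod[OF d1])
      hence d2: "((\<lambda>s. \<Prod>i\<in>{..<m} - set f. Lf p (t(Suc j := s)) i) has_field_derivative
          (\<Sum>i\<in>{..<m} - set f. x p (Suc j) i * (\<Prod>y\<in>({..<m} - set f) - {i}. Lf p t y))) (at (t (Suc j)))" for p f
        by simp
      show "((\<lambda>s. \<Sum>p\<in>P. w p * (\<Sum>f\<in>Inj j m. (\<Prod>l<j. x p (Suc l) (f ! l)) * (\<Prod>i\<in>{..<m} - set f. Lf p (t(Suc j := s)) i)))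
         has_field_derivative (\<Sum>p\<in>P. w p * (\<Sum>f\<in>Inj j m. (\<Prod>l<j. x p (Suc l) (f ! l)) *
        (\<Sum>i\<in>{..<m} - set f. x p (Suc j) i * (\<Prod>y\<in>({..<m} - set f) - {i}. Lf p t y))))) (at (t (Suc j)))"
        by (intro DERIV_sum DERIV_cmult d2)
    qed
    also have "\<dots> = (\<Sum>p\<in>P. w p * (\<Sum>g\<in>Inj (Suc j) m. (\<Prod>l<Suc j. x p (Suc l) (g ! l)) * (\<Prod>i\<in>{..<m} - set g. Lf p t i)))"
    proof -
      have inner: "(\<Sum>f\<in>Inj j m. (\<Prod>l<j. x p (Suc l) (f ! l)) * (\<Sum>i\<in>{..<m} - set f. x p (Suc j) i * (\<Prod>y\<in>({..<m} - set f) - {i}. Lf p t y)))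
        = (\<Sum>g\<in>Inj (Suc j) m. (\<Prod>l<Suc j. x p (Suc l) (g ! l)) * (\<Prod>i\<in>{..<m} - set g. Lf p t i))" for p
        unfolding sum_Inj_Suc
      proof (intro sum.cong refl)
        fix f assume f: "f \<in> Inj j m"
        hence lf: "length f = j" by (simp add: Inj_def)
        have pr: "(\<Prod>l<Suc j. x p (Suc l) ((f @ [i]) ! l)) = (\<Prod>l<j. x p (Suc l) (f ! l)) * x p (Suc j) i" for i
          using lf by (simp add: nth_append)
        have st: "{..<m} - set (f @ [i]) = ({..<m} - set f) - {i}" for i by auto
        show "(\<Prod>l<j. x p (Suc l) (f ! l)) * (\<Sum>i\<in>{..<m} - set f. x p (Suc j) i * (\<Prod>y\<in>({..<m} - set f) - {i}. Lf p t y))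
          = (\<Sum>i\<in>{..<m} - set f. (\<Prod>l<Suc j. x p (Suc l) ((f @ [i]) ! l)) * (\<Prod>y\<in>{..<m} - set (f @ [i]). Lf p t y))"
          unfolding pr st by (simp add: sum_distrib_left ac_simps)
      qed
      show ?thesis by (simp add: inner)
    qed
    finally show "mpartial (Suc j) (\<lambda>t. \<Sum>p\<in>P. w p * (\<Prod>i<m. Lf p t i)) t
      = (\<Sum>p\<in>P. w p * (\<Sum>g\<in>Inj (Suc j) m. (\<Prod>l<Suc j. x p (Suc l) (g ! l)) * (\<Prod>i\<in>{..<m} - set g. Lf p t i)))" .
  qed
  thus ?case unfolding Lf_def .
qed

lemma tensor_op_lin: "tensor_op m n A (\<lambda>x. \<Sum>\<gamma>\<in>D. u \<gamma> * f \<gamma> x) = (\<lambda>x. \<Sum>\<gamma>\<in>D. u \<gamma> * tensor_op m n A (f \<gamma>) x)"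
proof (rule ext)
  fix x
  show "tensor_op m n A (\<lambda>x. \<Sum>\<gamma>\<in>D. u \<gamma> * f \<gamma> x) x = (\<Sum>\<gamma>\<in>D. u \<gamma> * tensor_op m n A (f \<gamma>) x)"
  proof (cases "x \<in> Gam m n")
    case True
    have "tensor_op m n A (\<lambda>x. \<Sum>\<gamma>\<in>D. u \<gamma> * f \<gamma> x) x = (\<Sum>\<alpha>\<in>Gam m n. \<Sum>\<gamma>\<in>D. u \<gamma> * ((\<Prod>i<m. A (x ! i) (\<alpha> ! i)) * f \<gamma> \<alpha>))"
      using True by (simp add: tensor_op_def sum_distrib_left sum_distrib_right ac_simps)
    also have "\<dots> = (\<Sum>\<gamma>\<in>D. \<Sum>\<alpha>\<in>Gam m n. u \<gamma> * ((\<Prod>i<m. A (x ! i) (\<alpha> ! i)) * f \<gamma> \<alpha>))" by (rule sum.swap)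
    also have "\<dots> = (\<Sum>\<gamma>\<in>D. u \<gamma> * tensor_op m n A (f \<gamma>) x)"
      using True by (simp add: tensor_op_def sum_distrib_left)
    finally show ?thesis .
  qed (simp add: tensor_op_def)
qed

lemma tinner_lin: "tinner m n (\<lambda>x. \<Sum>\<gamma>\<in>D. u \<gamma> * f \<gamma> x) (\<lambda>x. \<Sum>\<delta>\<in>E. v \<delta> * g \<delta> x)
   = (\<Sum>\<gamma>\<in>D. \<Sum>\<delta>\<in>E. u \<gamma> * cnj (v \<delta>) * tinner m n (f \<gamma>) (g \<delta>))"
proof -
  have "tinner m n (\<lambda>x. \<Sum>\<gamma>\<in>D. u \<gamma> * f \<gamma> x) (\<lambda>x. \<Sum>\<delta>\<in>E. v \<delta> * g \<delta> x)
     = (\<Sum>\<beta>\<in>Gam m n. \<Sum>\<gamma>\<in>D. \<Sum>\<delta>\<in>E. u \<gamma> * cnj (v \<delta>) * (f \<gamma> \<beta> * cnj (g \<delta> \<beta>)))"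
    unfolding tinner_def by (simp add: cnj_sum sum_product ac_simps)
  also have "\<dots> = (\<Sum>\<gamma>\<in>D. \<Sum>\<beta>\<in>Gam m n. \<Sum>\<delta>\<in>E. u \<gamma> * cnj (v \<delta>) * (f \<gamma> \<beta> * cnj (g \<delta> \<beta>)))" by (rule sum.swap)
  also have "\<dots> = (\<Sum>\<gamma>\<in>D. \<Sum>\<delta>\<in>E. \<Sum>\<beta>\<in>Gam m n. u \<gamma> * cnj (v \<delta>) * (f \<gamma> \<beta> * cnj (g \<delta> \<beta>)))"
    by (intro sum.cong refl) (rule sum.swap)
  also have "\<dots> = (\<Sum>\<gamma>\<in>D. \<Sum>\<delta>\<in>E. u \<gamma> * cnj (v \<delta>) * tinner m n (f \<gamma>) (g \<delta>))"
    by (simp add: tinner_def sum_distrib_left)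
  finally show ?thesis .
qed

lemma KchiMat_formula:
  assumes ch: "irreducible_character m chi" and DG: "D \<subseteq> Gam m n" and \<alpha>: "\<alpha> \<in> D" and \<beta>: "\<beta> \<in> D"
    and onb: "\<forall>\<alpha>\<in>D. onb m n chi D \<alpha> = (\<lambda>x. \<Sum>\<gamma>\<in>D. B \<gamma> \<alpha> * estar m n chi \<gamma> x)"
  shows "KchiMat m n chi D A \<alpha> \<beta> = (\<Sum>\<gamma>\<in>D. \<Sum>\<delta>\<in>D. B \<gamma> \<beta> * cnj (B \<delta> \<alpha>) * (cc m chi * imm m (cnjchar chi) (submat A \<delta> \<gamma>)))"
proof -
  have "KchiMat m n chi D A \<alpha> \<beta> = (\<Sum>\<gamma>\<in>D. \<Sum>\<delta>\<in>D. B \<gamma> \<beta> * cnj (B \<delta> \<alpha>) * tinner m n (tensor_op m n A (estar m n chi \<gamma>)) (estar m n chi \<delta>))"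
    unfolding KchiMat_def using onb \<alpha> \<beta> by (simp add: tensor_op_lin tinner_lin)
  also have "\<dots> = (\<Sum>\<gamma>\<in>D. \<Sum>\<delta>\<in>D. B \<gamma> \<beta> * cnj (B \<delta> \<alpha>) * (cc m chi * imm m (cnjchar chi) (submat A \<delta> \<gamma>)))"
    by (intro sum.cong refl) (simp add: T_formula[OF ch] subsetD[OF DG])
  finally show ?thesis .
qed

definition Zs :: "nat \<Rightarrow> nat \<Rightarrow> (nat \<Rightarrow> nat \<Rightarrow> complex) \<Rightarrow> (nat \<Rightarrow> nat \<Rightarrow> nat \<Rightarrow> complex) \<Rightarrow> nat list \<Rightarrow> nat list \<Rightarrow> (nat \<Rightarrow> nat) \<Rightarrow> complex" where
  "Zs k m A X \<gamma> \<delta> \<pi> = (\<Sum>f\<in>Inj k m. (\<Prod>l<k. X (Suc l) (\<delta> ! (f ! l)) (\<gamma> ! \<pi> (f ! l))) *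
       (\<Prod>i\<in>{..<m} - set f. A (\<delta> ! i) (\<gamma> ! \<pi> i)))"

lemma sum_triple: "(\<Sum>p\<in>(D\<times>E)\<times>S. F p) = (\<Sum>\<gamma>\<in>D. \<Sum>\<delta>\<in>E. \<Sum>\<pi>\<in>S. (F ((\<gamma>,\<delta>),\<pi>)::'a::comm_monoid_add))"
proof -
  have "(\<Sum>\<gamma>\<in>D. \<Sum>\<delta>\<in>E. \<Sum>\<pi>\<in>S. F ((\<gamma>,\<delta>),\<pi>)) = (\<Sum>(\<gamma>,\<delta>)\<in>D\<times>E. \<Sum>\<pi>\<in>S. F ((\<gamma>,\<delta>),\<pi>))"
    by (rule sum.cartesian_product)
  also have "\<dots> = (\<Sum>x\<in>D\<times>E. \<Sum>\<pi>\<in>S. F (x,\<pi>))" by (simp only: split_def prod.collapse)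
  also have "\<dots> = (\<Sum>(x,\<pi>)\<in>(D\<times>E)\<times>S. F (x,\<pi>))" by (rule sum.cartesian_product)
  also have "\<dots> = (\<Sum>p\<in>(D\<times>E)\<times>S. F p)" by (simp only: split_def prod.collapse)
  finally show ?thesis by simp
qed

lemma DkK_formula:
  assumes ch: "irreducible_character m chi" and DG: "D \<subseteq> Gam m n" and \<alpha>: "\<alpha> \<in> D" and \<beta>: "\<beta> \<in> D"
    and onb: "\<forall>\<alpha>\<in>D. onb m n chi D \<alpha> = (\<lambda>x. \<Sum>\<gamma>\<in>D. B \<gamma> \<alpha> * estar m n chi \<gamma> x)"
  shows "DkKchi m n chi D k A X \<alpha> \<beta> = (\<Sum>\<gamma>\<in>D. \<Sum>\<delta>\<in>D. B \<gamma> \<beta> * cnj (B \<delta> \<alpha>) * cc m chi *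
           (\<Sum>\<pi>\<in>perms m. cnj (chi \<pi>) * Zs k m A X \<gamma> \<delta> \<pi>))"
proof -
  have finD: "finite D" by (rule finite_subset[OF DG finite_Gam])
  define P where "P = (D \<times> D) \<times> perms m"
  define w where "w p = (case p of ((\<gamma>,\<delta>),\<pi>) \<Rightarrow> B \<gamma> \<beta> * cnj (B \<delta> \<alpha>) * cc m chi * cnj (chi \<pi>))" for p
  define a where "a p i = (case p of ((\<gamma>,\<delta>),\<pi>) \<Rightarrow> A (\<delta> ! i) (\<gamma> ! \<pi> i))" for p i
  define x where "x p l i = (case p of ((\<gamma>,\<delta>),\<pi>) \<Rightarrow> X l (\<delta> ! i) (\<gamma> ! \<pi> i))" for p l i
  have finP: "finite P" using finD by (simp add: P_def)
  have eq: "(\<lambda>t. KchiMat m n chi D (\<lambda>i j. A i j + (\<Sum>l=1..k. t l * X l i j)) \<alpha> \<beta>)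
     = (\<lambda>t. \<Sum>p\<in>P. w p * (\<Prod>i<m. a p i + (\<Sum>l=1..k. t l * x p l i)))"
  proof (rule ext)
    fix t
    show "KchiMat m n chi D (\<lambda>i j. A i j + (\<Sum>l=1..k. t l * X l i j)) \<alpha> \<beta>
       = (\<Sum>p\<in>P. w p * (\<Prod>i<m. a p i + (\<Sum>l=1..k. t l * x p l i)))"
      unfolding KchiMat_formula[OF ch DG \<alpha> \<beta> onb] P_def sum_triple
      by (simp add: w_def a_def x_def imm_def submat_def cnjchar_def sum_distrib_left ac_simps)
  qed
  have "DkKchi m n chi D k A X \<alpha> \<beta> = (\<Sum>p\<in>P. w p * (\<Sum>f\<in>Inj k m. (\<Prod>l<k. x p (Suc l) (f ! l)) *
                 (\<Prod>i\<in>{..<m} - set f. a p i + (\<Sum>l=1..k. 0 * x p l i))))"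
    unfolding DkKchi_def eq mpartial_formula[OF finP le_refl] by simp
  also have "\<dots> = (\<Sum>\<gamma>\<in>D. \<Sum>\<delta>\<in>D. B \<gamma> \<beta> * cnj (B \<delta> \<alpha>) * cc m chi *
           (\<Sum>\<pi>\<in>perms m. cnj (chi \<pi>) * Zs k m A X \<gamma> \<delta> \<pi>))"
    unfolding P_def sum_triple
    by (simp add: w_def a_def x_def Zs_def sum_distrib_left ac_simps)
  finally show ?thesis .
qed

definition phi :: "nat \<Rightarrow> nat \<Rightarrow> (nat \<Rightarrow> nat) \<Rightarrow> nat list" where
  "phi k m \<sigma> = map (\<lambda>l. inv \<sigma> (m - k + l)) [0..<k]"

lemma perms_bij: "\<sigma> \<in> perms m \<Longrightarrow> bij \<sigma>" by (simp add: perms_def permutes_bij)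
lemma perms_inj: "\<sigma> \<in> perms m \<Longrightarrow> inj \<sigma>" by (simp add: perms_def permutes_inj)
lemma perms_apply_inv: "\<sigma> \<in> perms m \<Longrightarrow> \<sigma> (inv \<sigma> x) = x" "\<sigma> \<in> perms m \<Longrightarrow> inv \<sigma> (\<sigma> x) = x"
  by (auto simp: perms_def permutes_inverses)

lemma phi_len[simp]: "length (phi k m \<sigma>) = k" by (simp add: phi_def)
lemma phi_nth: "l < k \<Longrightarrow> phi k m \<sigma> ! l = inv \<sigma> (m - k + l)" by (simp add: phi_def)

lemma phi_Inj: assumes "k \<le> m" "\<sigma> \<in> perms m" shows "phi k m \<sigma> \<in> Inj k m"
proof -
  have ij: "inj (inv \<sigma>)" using perms_inj[OF perms_inv[OF assms(2)]] .
  have "distinct (phi k m \<sigma>)" unfolding phi_def distinct_map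
    by (auto simp: inj_on_def dest: injD[OF ij])
  moreover have "set (phi k m \<sigma>) \<subseteq> {..<m}"
    using assms perms_lt[OF perms_inv[OF assms(2)]] by (auto simp: phi_def)
  ultimately show ?thesis by (simp add: Inj_def)
qed

lemma set_phi: assumes "k \<le> m" "\<sigma> \<in> perms m" "i < m"
  shows "(i \<in> set (phi k m \<sigma>)) = (m - k \<le> \<sigma> i)"
proof
  assume "i \<in> set (phi k m \<sigma>)"
  then obtain l where "l < k" "i = inv \<sigma> (m - k + l)" by (auto simp: phi_def)
  thus "m - k \<le> \<sigma> i" using assms(2) by (simp add: perms_apply_inv)
next
  assume h: "m - k \<le> \<sigma> i"
  have lt: "\<sigma> i < m" using perms_lt[OF assms(2,3)] .
  define l where "l = \<sigma> i - (m - k)"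
  have "l < k" "m - k + l = \<sigma> i" using h lt assms(1) by (auto simp: l_def)
  hence "phi k m \<sigma> ! l = i" using assms(2) by (simp add: phi_nth perms_apply_inv)
  thus "i \<in> set (phi k m \<sigma>)" using \<open>l < k\<close> by (metis nth_mem phi_len)
qed

lemma prod_set_list: "distinct f \<Longrightarrow> (\<Prod>i\<in>set f. g i) = (\<Prod>l<length f. g (f ! l))"
proof -
  assume d: "distinct f"
  have "set f = (nth f) ` {..<length f}" by (auto simp: set_conv_nth)
  moreover have "inj_on (nth f) {..<length f}" using d by (simp add: inj_on_nth)
  ultimately show ?thesis by (simp add: prod.reindex)
qed

definition hterm :: "nat \<Rightarrow> nat \<Rightarrow> (nat \<Rightarrow> nat \<Rightarrow> complex) \<Rightarrow> (nat \<Rightarrow> nat \<Rightarrow> nat \<Rightarrow> complex) \<Rightarrow> nat list \<Rightarrow> nat list \<Rightarrow> (nat \<Rightarrow> nat) \<Rightarrow> nat list \<Rightarrow> complex" where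
  "hterm k m A X \<gamma> \<delta> \<pi> f = (\<Prod>l<k. X (Suc l) (\<delta> ! (f ! l)) (\<gamma> ! \<pi> (f ! l))) *
       (\<Prod>i\<in>{..<m} - set f. A (\<delta> ! i) (\<gamma> ! \<pi> i))"

lemma Zs_hterm: "Zs k m A X \<gamma> \<delta> \<pi> = (\<Sum>f\<in>Inj k m. hterm k m A X \<gamma> \<delta> \<pi> f)"
  by (simp add: Zs_def hterm_def)

definition YY :: "nat \<Rightarrow> nat \<Rightarrow> (nat \<Rightarrow> nat \<Rightarrow> complex) \<Rightarrow> (nat \<Rightarrow> nat \<Rightarrow> nat \<Rightarrow> complex) \<Rightarrow> nat list \<Rightarrow> nat list \<Rightarrow> nat \<Rightarrow> nat \<Rightarrow> nat \<Rightarrow> complex" where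
  "YY k m A X \<gamma> \<delta> s i j = (if s < m - k then A (\<delta> ! i) (\<gamma> ! j) else X (s - (m - k) + 1) (\<delta> ! i) (\<gamma> ! j))"

lemma prod_YY: assumes "k \<le> m" "\<sigma> \<in> perms m"
  shows "(\<Prod>i<m. YY k m A X \<gamma> \<delta> (\<sigma> i) i (\<pi> i)) = hterm k m A X \<gamma> \<delta> \<pi> (phi k m \<sigma>)"
proof -
  let ?f = "phi k m \<sigma>"
  have fI: "?f \<in> Inj k m" by (rule phi_Inj[OF assms])
  hence sub: "set ?f \<subseteq> {..<m}" and dist: "distinct ?f" by (auto simp: Inj_def)
  have "(\<Prod>i<m. YY k m A X \<gamma> \<delta> (\<sigma> i) i (\<pi> i)) =
     (\<Prod>i\<in>{..<m} - set ?f. YY k m A X \<gamma> \<delta> (\<sigma> i) i (\<pi> i)) * (\<Prod>i\<in>set ?f. YY k m A X \<gamma> \<delta> (\<sigma> i) i (\<pi> i))"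
    by (rule prod.subset_diff[OF sub]) simp
  also have "(\<Prod>i\<in>{..<m} - set ?f. YY k m A X \<gamma> \<delta> (\<sigma> i) i (\<pi> i)) = (\<Prod>i\<in>{..<m} - set ?f. A (\<delta> ! i) (\<gamma> ! \<pi> i))"
    using set_phi[OF assms] by (intro prod.cong refl) (auto simp: YY_def)
  also have "(\<Prod>i\<in>set ?f. YY k m A X \<gamma> \<delta> (\<sigma> i) i (\<pi> i)) = (\<Prod>l<k. YY k m A X \<gamma> \<delta> (\<sigma> (?f ! l)) (?f ! l) (\<pi> (?f ! l)))"
    using prod_set_list[OF dist] by simp
  also have "\<dots> = (\<Prod>l<k. X (Suc l) (\<delta> ! (?f ! l)) (\<gamma> ! \<pi> (?f ! l)))"
  proof (intro prod.cong refl)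
    fix l assume "l \<in> {..<k}"
    hence "\<sigma> (?f ! l) = m - k + l" using assms(2) by (simp add: phi_nth perms_apply_inv)
    thus "YY k m A X \<gamma> \<delta> (\<sigma> (?f ! l)) (?f ! l) (\<pi> (?f ! l)) = X (Suc l) (\<delta> ! (?f ! l)) (\<gamma> ! \<pi> (?f ! l))"
      by (simp add: YY_def)
  qed
  finally show ?thesis by (simp add: hterm_def mult.commute)
qed

lemma exists_phi: assumes km: "k \<le> m" and f: "f \<in> Inj k m" shows "\<exists>\<sigma>0\<in>perms m. phi k m \<sigma>0 = f"
proof -
  have sf: "set f \<subseteq> {0..<m}" and df: "distinct f" and lf: "length f = k" using f by (auto simp: Inj_def)
  define c where "c = filter (\<lambda>i. i \<notin> set f) [0..<m]"
  define L where "L = c @ f"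
  have setc: "set c = {0..<m} - set f" by (auto simp: c_def)
  have dc: "distinct c" by (simp add: c_def)
  have "length c = card (set c)" using distinct_card[OF dc] by simp
  also have "\<dots> = m - k" using setc card_Diff_subset[OF _ sf] distinct_card[OF df] lf by simp
  finally have lc: "length c = m - k" .
  have dL: "distinct L" using dc df setc by (auto simp: L_def)
  have setL: "set L = {0..<m}" using setc sf by (auto simp: L_def)
  have lL: "length L = m" using lc lf km by (simp add: L_def)
  define \<psi> where "\<psi> i = (if i < m then L ! i else i)" for i
  have b1: "bij_betw (nth L) {0..<m} {0..<m}" using bij_betw_nth[OF dL] lL setL by (simp add: lessThan_atLeast0)
  have "bij_betw \<psi> {0..<m} {0..<m} = bij_betw (nth L) {0..<m} {0..<m}" by (rule bij_betw_cong) (simp add: \<psi>_def)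
  hence "bij_betw \<psi> {0..<m} {0..<m}" using b1 by simp
  hence p\<psi>: "\<psi> permutes {0..<m}" by (rule bij_imp_permutes) (simp add: \<psi>_def)
  define \<sigma>0 where "\<sigma>0 = inv \<psi>"
  have s0: "\<sigma>0 \<in> perms m" using p\<psi> by (simp add: \<sigma>0_def perms_def permutes_inv)
  have is0: "inv \<sigma>0 = \<psi>" using p\<psi> by (simp add: \<sigma>0_def permutes_inv_inv)
  have "phi k m \<sigma>0 = f"
  proof (rule nth_equalityI)
    fix l assume "l < length (phi k m \<sigma>0)"
    hence l: "l < k" by simp
    have "phi k m \<sigma>0 ! l = L ! (m - k + l)" using l km by (simp add: phi_nth is0 \<psi>_def)
    also have "\<dots> = L ! (length c + l)" using lc by simp
    also have "\<dots> = f ! l" by (simp add: L_def)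
    finally show "phi k m \<sigma>0 ! l = f ! l" .
  qed (simp add: lf)
  with s0 show ?thesis by blast
qed

lemma fiber_card: assumes km: "k \<le> m" and f: "f \<in> Inj k m"
  shows "card {\<sigma> \<in> perms m. phi k m \<sigma> = f} = fact (m - k)"
proof -
  obtain \<sigma>0 where s0: "\<sigma>0 \<in> perms m" and ph0: "phi k m \<sigma>0 = f" using exists_phi[OF km f] by blast
  have eqset: "{\<sigma> \<in> perms m. phi k m \<sigma> = f} = (\<lambda>\<tau>. \<tau> \<circ> \<sigma>0) ` {\<tau>. \<tau> permutes {0..<m-k}}"
  proof
    show "(\<lambda>\<tau>. \<tau> \<circ> \<sigma>0) ` {\<tau>. \<tau> permutes {0..<m-k}} \<subseteq> {\<sigma> \<in> perms m. phi k m \<sigma> = f}"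
    proof clarify
      fix \<tau> assume t: "\<tau> permutes {0..<m-k}"
      have tm: "\<tau> \<in> perms m" using permutes_subset[OF t] by (auto simp: perms_def)
      have "phi k m (\<tau> \<circ> \<sigma>0) = phi k m \<sigma>0"
      proof (rule nth_equalityI)
        fix l assume "l < length (phi k m (\<tau> \<circ> \<sigma>0))"
        hence l: "l < k" by simp
        have "inv \<tau> (m - k + l) = m - k + l"
          using permutes_not_in[OF permutes_inv[OF t]] by simp
        thus "phi k m (\<tau> \<circ> \<sigma>0) ! l = phi k m \<sigma>0 ! l"
          using l by (simp add: phi_nth inv_comp_perms[OF tm s0])
      qed simp
      thus "\<tau> \<circ> \<sigma>0 \<in> perms m \<and> phi k m (\<tau> \<circ> \<sigma>0) = f" using ph0 perms_comp[OF tm s0] by simp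
    qed
  next
    show "{\<sigma> \<in> perms m. phi k m \<sigma> = f} \<subseteq> (\<lambda>\<tau>. \<tau> \<circ> \<sigma>0) ` {\<tau>. \<tau> permutes {0..<m-k}}"
    proof (intro subsetI)
      fix \<sigma> assume "\<sigma> \<in> {\<sigma> \<in> perms m. phi k m \<sigma> = f}"
      hence s: "\<sigma> \<in> perms m" and ph: "phi k m \<sigma> = f" by auto
      define \<tau> where "\<tau> = \<sigma> \<circ> inv \<sigma>0"
      have tm: "\<tau> \<in> perms m" using s s0 by (simp add: \<tau>_def perms_comp perms_inv)
      have eq: "\<sigma> = \<tau> \<circ> \<sigma>0" using s0 by (simp add: \<tau>_def o_assoc[symmetric] perms_inv_o)
      have fx: "\<tau> x = x" if x: "x \<notin> {0..<m-k}" for x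
      proof (cases "x < m")
        case True
        define l where "l = x - (m - k)"
        have l: "l < k" "m - k + l = x" using x True km by (auto simp: l_def)
        have "inv \<sigma> x = phi k m \<sigma> ! l" using l by (simp add: phi_nth)
        also have "\<dots> = phi k m \<sigma>0 ! l" using ph ph0 by simp
        also have "\<dots> = inv \<sigma>0 x" using l by (simp add: phi_nth)
        finally have "inv \<sigma> x = inv \<sigma>0 x" .
        hence "\<sigma> (inv \<sigma>0 x) = \<sigma> (inv \<sigma> x)" by simp
        thus ?thesis using s by (simp add: \<tau>_def perms_apply_inv)
      next
        case False
        have "inv \<sigma>0 x = x" using permutes_not_in[OF permutes_inv[of \<sigma>0 "{0..<m}"]] s0 False by (auto simp: perms_def)
        moreover have "\<sigma> x = x" using permutes_not_in[of \<sigma> "{0..<m}"] s False by (auto simp: perms_def)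
        ultimately show ?thesis by (simp add: \<tau>_def)
      qed
      have "\<tau> permutes {0..<m-k}" using tm fx unfolding perms_def permutes_def by blast
      with eq show "\<sigma> \<in> (\<lambda>\<tau>. \<tau> \<circ> \<sigma>0) ` {\<tau>. \<tau> permutes {0..<m-k}}" by blast
    qed
  qed
  have inj: "inj_on (\<lambda>\<tau>. \<tau> \<circ> \<sigma>0) {\<tau>. \<tau> permutes {0..<m-k}}"
  proof (rule inj_onI)
    fix \<tau> \<tau>' assume "\<tau> \<circ> \<sigma>0 = \<tau>' \<circ> \<sigma>0"
    hence "\<tau> \<circ> \<sigma>0 \<circ> inv \<sigma>0 = \<tau>' \<circ> \<sigma>0 \<circ> inv \<sigma>0" by simp
    thus "\<tau> = \<tau>'" using s0 by (simp add: o_assoc[symmetric] perms_inv_o)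
  qed
  have "card {\<sigma> \<in> perms m. phi k m \<sigma> = f} = card {\<tau>. \<tau> permutes {0..<m-k}}"
    unfolding eqset by (rule card_image[OF inj])
  also have "\<dots> = fact (m - k)" by (rule card_permutations) auto
  finally show ?thesis .
qed

lemma CL: assumes km: "k \<le> m"
  shows "(\<Sum>\<sigma>\<in>perms m. \<Prod>i<m. YY k m A X \<gamma> \<delta> (\<sigma> i) i (\<pi> i)) = fact (m - k) * Zs k m A X \<gamma> \<delta> \<pi>"
proof -
  have "(\<Sum>\<sigma>\<in>perms m. \<Prod>i<m. YY k m A X \<gamma> \<delta> (\<sigma> i) i (\<pi> i)) = (\<Sum>\<sigma>\<in>perms m. hterm k m A X \<gamma> \<delta> \<pi> (phi k m \<sigma>))"
    by (intro sum.cong refl) (simp add: prod_YY km)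
  also have "\<dots> = (\<Sum>f\<in>Inj k m. \<Sum>\<sigma>\<in>{\<sigma>. \<sigma> \<in> perms m \<and> phi k m \<sigma> = f}. hterm k m A X \<gamma> \<delta> \<pi> (phi k m \<sigma>))"
    by (rule sum.group[symmetric]) (auto simp: phi_Inj km)
  also have "\<dots> = (\<Sum>f\<in>Inj k m. of_nat (fact (m - k)) * hterm k m A X \<gamma> \<delta> \<pi> f)"
  proof (intro sum.cong refl)
    fix f assume f: "f \<in> Inj k m"
    have "(\<Sum>\<sigma>\<in>{\<sigma>. \<sigma> \<in> perms m \<and> phi k m \<sigma> = f}. hterm k m A X \<gamma> \<delta> \<pi> (phi k m \<sigma>))
       = (\<Sum>\<sigma>\<in>{\<sigma>. \<sigma> \<in> perms m \<and> phi k m \<sigma> = f}. hterm k m A X \<gamma> \<delta> \<pi> f)" by (intro sum.cong refl) simp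
    also have "\<dots> = of_nat (card {\<sigma> \<in> perms m. phi k m \<sigma> = f}) * hterm k m A X \<gamma> \<delta> \<pi> f" by simp
    finally show "(\<Sum>\<sigma>\<in>{\<sigma>. \<sigma> \<in> perms m \<and> phi k m \<sigma> = f}. hterm k m A X \<gamma> \<delta> \<pi> (phi k m \<sigma>)) = of_nat (fact (m - k)) * hterm k m A X \<gamma> \<delta> \<pi> f"
      using fiber_card[OF km f] by simp
  qed
  also have "\<dots> = fact (m - k) * Zs k m A X \<gamma> \<delta> \<pi>" by (simp add: Zs_hterm sum_distrib_left)
  finally show ?thesis .
qed

lemma miximm_Zs: assumes km: "k \<le> m"
  shows "miximm m (cnjchar chi) k A X \<delta> \<gamma> = fact (m - k) / fact m * (\<Sum>\<pi>\<in>perms m. cnj (chi \<pi>) * Zs k m A X \<gamma> \<delta> \<pi>)"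
proof -
  have Ys: "(if l < m - k then submat A \<delta> \<gamma> else submat (X (l - (m - k) + 1)) \<delta> \<gamma>) i j = YY k m A X \<gamma> \<delta> l i j" for l i j
    by (simp add: submat_def YY_def)
  have "(\<Sum>\<sigma>\<in>perms m. imm m (cnjchar chi) (\<lambda>i j. (\<lambda>l. if l < m - k then submat A \<delta> \<gamma> else submat (X (l - (m - k) + 1)) \<delta> \<gamma>) (\<sigma> j) i j))
     = (\<Sum>\<sigma>\<in>perms m. \<Sum>\<pi>\<in>perms m. cnj (chi \<pi>) * (\<Prod>i<m. YY k m A X \<gamma> \<delta> (\<sigma> (\<pi> i)) i (\<pi> i)))"
    by (simp add: imm_def cnjchar_def Ys)
  also have "\<dots> = (\<Sum>\<pi>\<in>perms m. cnj (chi \<pi>) * (\<Sum>\<sigma>\<in>perms m. \<Prod>i<m. YY k m A X \<gamma> \<delta> (\<sigma> (\<pi> i)) i (\<pi> i)))"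
    by (subst sum.swap) (simp add: sum_distrib_left)
  also have "\<dots> = (\<Sum>\<pi>\<in>perms m. cnj (chi \<pi>) * (fact (m - k) * Zs k m A X \<gamma> \<delta> \<pi>))"
  proof (intro sum.cong refl)
    fix \<pi> assume \<pi>: "\<pi> \<in> perms m"
    have "(\<Sum>\<sigma>\<in>perms m. \<Prod>i<m. YY k m A X \<gamma> \<delta> (\<sigma> (\<pi> i)) i (\<pi> i)) = (\<Sum>\<sigma>\<in>perms m. \<Prod>i<m. YY k m A X \<gamma> \<delta> ((\<sigma> \<circ> \<pi>) i) i (\<pi> i))"
      by simp
    also have "\<dots> = (\<Sum>\<sigma>\<in>perms m. \<Prod>i<m. YY k m A X \<gamma> \<delta> (\<sigma> i) i (\<pi> i))"
      by (rule sum_comp_right[OF \<pi>, where g="\<lambda>\<sigma>. \<Prod>i<m. YY k m A X \<gamma> \<delta> (\<sigma> i) i (\<pi> i)"])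
    also have "\<dots> = fact (m - k) * Zs k m A X \<gamma> \<delta> \<pi>" by (rule CL[OF km])
    finally show "cnj (chi \<pi>) * (\<Sum>\<sigma>\<in>perms m. \<Prod>i<m. YY k m A X \<gamma> \<delta> (\<sigma> (\<pi> i)) i (\<pi> i)) = cnj (chi \<pi>) * (fact (m - k) * Zs k m A X \<gamma> \<delta> \<pi>)" by simp
  qed
  finally have S: "(\<Sum>\<sigma>\<in>perms m. imm m (cnjchar chi) (\<lambda>i j. (\<lambda>l. if l < m - k then submat A \<delta> \<gamma> else submat (X (l - (m - k) + 1)) \<delta> \<gamma>) (\<sigma> j) i j))
     = (\<Sum>\<pi>\<in>perms m. cnj (chi \<pi>) * (fact (m - k) * Zs k m A X \<gamma> \<delta> \<pi>))" .
  have "miximm m (cnjchar chi) k A X \<delta> \<gamma> = (\<Sum>\<pi>\<in>perms m. cnj (chi \<pi>) * (fact (m - k) * Zs k m A X \<gamma> \<delta> \<pi>)) / fact m"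
    unfolding miximm_def mix_imm_def S[symmetric] by simp
  also have "\<dots> = (\<Sum>\<pi>\<in>perms m. fact (m - k) / fact m * (cnj (chi \<pi>) * Zs k m A X \<gamma> \<delta> \<pi>))"
    unfolding sum_divide_distrib by (intro sum.cong refl) (simp add: field_simps)
  finally show ?thesis by (simp add: sum_distrib_left)
qed

lemma idx_nth: assumes "distinct xs" "p < length xs" shows "idx xs (xs ! p) = p"
  unfolding idx_def
proof (rule the_equality)
  show "p < length xs \<and> xs ! p = xs ! p" using assms by simp
next
  fix q assume "q < length xs \<and> xs ! q = xs ! p"
  thus "q = p" using assms nth_eq_iff_index_eq by blast
qed

lemma idx_in: assumes "distinct xs" "x \<in> set xs" shows "idx xs x < length xs" "xs ! idx xs x = x"
proof -
  obtain p where p: "p < length xs" "xs ! p = x" using assms(2) by (auto simp: in_set_conv_nth)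
  show "idx xs x < length xs" "xs ! idx xs x = x" using idx_nth[OF assms(1) p(1)] p by auto
qed

lemma Qkm_props: assumes "\<rho> \<in> Qkm k m" shows "distinct \<rho>" "length \<rho> = k" "set \<rho> \<subseteq> {0..<m}" "sorted_wrt (<) \<rho>"
  using assms by (auto simp: Qkm_def strict_sorted_iff)

lemma compl_props: "distinct (compl m \<rho>)" "set (compl m \<rho>) = {0..<m} - set \<rho>"
  by (auto simp: compl_def)

lemma BD_eval:
  assumes \<rho>: "\<rho> \<in> Qkm k m" and \<tau>: "\<tau> \<in> Qkm k m" and i: "i < m" and j: "j < m"
  shows "blockdsum m (subsq (Xst X \<delta> \<gamma> \<sigma> \<tau>) \<rho> \<tau>) (cominor m (submat A \<delta> \<gamma>) \<rho> \<tau>) \<rho> \<tau> i j =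
    (if i \<in> set \<rho> \<and> j \<in> set \<tau> then X (\<sigma> (idx \<tau> j) + 1) (\<delta> ! i) (\<gamma> ! j)
     else if i \<notin> set \<rho> \<and> j \<notin> set \<tau> then A (\<delta> ! i) (\<gamma> ! j) else 0)"
proof -
  have d\<rho>: "distinct \<rho>" and d\<tau>: "distinct \<tau>" using Qkm_props \<rho> \<tau> by auto
  show ?thesis
  proof (cases "i \<in> set \<rho> \<and> j \<in> set \<tau>")
    case True
    thus ?thesis using idx_in[OF d\<rho>, of i] idx_in[OF d\<tau>, of j]
      by (simp add: blockdsum_def subsq_def Xst_def submat_def)
  next
    case False
    show ?thesis
    proof (cases "i \<notin> set \<rho> \<and> j \<notin> set \<tau>")
      case True
      have "i \<in> set (compl m \<rho>)" "j \<in> set (compl m \<tau>)" using True i j by (auto simp: compl_props)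
      thus ?thesis using True idx_in[OF compl_props(1), of i m \<rho>] idx_in[OF compl_props(1), of j m \<tau>]
        by (simp add: blockdsum_def cominor_def submat_def)
    next
      case False2: False
      thus ?thesis using False by (auto simp: blockdsum_def)
    qed
  qed
qed

definition Vt :: "nat \<Rightarrow> (nat \<Rightarrow> nat \<Rightarrow> complex) \<Rightarrow> (nat \<Rightarrow> nat \<Rightarrow> nat \<Rightarrow> complex) \<Rightarrow> nat list \<Rightarrow> nat list \<Rightarrow> (nat \<Rightarrow> nat) \<Rightarrow> (nat \<Rightarrow> nat) \<Rightarrow> nat list \<Rightarrow> complex" where
  "Vt m A X \<gamma> \<delta> \<pi> \<sigma> \<tau> = (\<Prod>i<m. if \<pi> i \<in> set \<tau> then X (\<sigma> (idx \<tau> (\<pi> i)) + 1) (\<delta> ! i) (\<gamma> ! \<pi> i) else A (\<delta> ! i) (\<gamma> ! \<pi> i))"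

lemma rho_collapse:
  assumes \<pi>: "\<pi> \<in> perms m" and \<tau>: "\<tau> \<in> Qkm k m"
  shows "(\<Sum>\<rho>\<in>Qkm k m. \<Prod>i<m. blockdsum m (subsq (Xst X \<delta> \<gamma> \<sigma> \<tau>) \<rho> \<tau>) (cominor m (submat A \<delta> \<gamma>) \<rho> \<tau>) \<rho> \<tau> i (\<pi> i))
    = Vt m A X \<gamma> \<delta> \<pi> \<sigma> \<tau>"
proof -
  define S0 where "S0 = {i \<in> {..<m}. \<pi> i \<in> set \<tau>}"
  define \<rho>0 where "\<rho>0 = sorted_list_of_set S0"
  have finS0: "finite S0" by (simp add: S0_def)
  have setr0: "set \<rho>0 = S0" using finS0 by (simp add: \<rho>0_def)
  have st\<tau>: "set \<tau> \<subseteq> {0..<m}" and d\<tau>: "distinct \<tau>" and l\<tau>: "length \<tau> = k" using Qkm_props[OF \<tau>] by auto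
  have img: "\<pi> ` S0 = set \<tau>"
  proof
    show "\<pi> ` S0 \<subseteq> set \<tau>" by (auto simp: S0_def)
    show "set \<tau> \<subseteq> \<pi> ` S0"
    proof
      fix j assume j: "j \<in> set \<tau>"
      hence "j < m" using st\<tau> by auto
      hence "inv \<pi> j < m" using perms_lt[OF perms_inv[OF \<pi>]] by simp
      moreover have "\<pi> (inv \<pi> j) = j" using \<pi> by (simp add: perms_apply_inv)
      ultimately show "j \<in> \<pi> ` S0" using j unfolding S0_def by (metis (mono_tags, lifting) image_eqI lessThan_iff mem_Collect_eq)
    qed
  qed
  have "card S0 = card (\<pi> ` S0)" using perms_inj[OF \<pi>] by (simp add: card_image inj_on_subset)
  also have "\<dots> = k" using img distinct_card[OF d\<tau>] l\<tau> by simp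
  finally have cS0: "card S0 = k" .
  have r0Q: "\<rho>0 \<in> Qkm k m"
    using finS0 cS0 unfolding Qkm_def \<rho>0_def by (auto simp: S0_def)
  have F0: "(\<Prod>i<m. blockdsum m (subsq (Xst X \<delta> \<gamma> \<sigma> \<tau>) \<rho> \<tau>) (cominor m (submat A \<delta> \<gamma>) \<rho> \<tau>) \<rho> \<tau> i (\<pi> i))
     = (if \<rho> = \<rho>0 then Vt m A X \<gamma> \<delta> \<pi> \<sigma> \<tau> else 0)" if \<rho>: "\<rho> \<in> Qkm k m" for \<rho>
  proof (cases "\<rho> = \<rho>0")
    case True
    have "(\<Prod>i<m. blockdsum m (subsq (Xst X \<delta> \<gamma> \<sigma> \<tau>) \<rho>0 \<tau>) (cominor m (submat A \<delta> \<gamma>) \<rho>0 \<tau>) \<rho>0 \<tau> i (\<pi> i))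
       = Vt m A X \<gamma> \<delta> \<pi> \<sigma> \<tau>" unfolding Vt_def
      using perms_lt[OF \<pi>] by (intro prod.cong refl) (auto simp: BD_eval[OF r0Q \<tau>] setr0 S0_def)
    thus ?thesis using True by simp
  next
    case False
    have "set \<rho> \<noteq> S0"
    proof
      assume "set \<rho> = S0"
      hence "\<rho> = \<rho>0" using strict_sorted_equal[of \<rho>0 \<rho>] Qkm_props[OF \<rho>] Qkm_props[OF r0Q] setr0 by simp
      with False show False by simp
    qed
    moreover have "set \<rho> \<subseteq> {..<m}" "S0 \<subseteq> {..<m}" using Qkm_props[OF \<rho>] by (auto simp: S0_def)
    ultimately obtain i where i: "i < m" "(i \<in> set \<rho>) \<noteq> (i \<in> S0)" by blast
    have "blockdsum m (subsq (Xst X \<delta> \<gamma> \<sigma> \<tau>) \<rho> \<tau>) (cominor m (submat A \<delta> \<gamma>) \<rho> \<tau>) \<rho> \<tau> i (\<pi> i) = 0"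
      using i perms_lt[OF \<pi> i(1)] by (auto simp: BD_eval[OF \<rho> \<tau>] S0_def)
    hence "(\<Prod>i<m. blockdsum m (subsq (Xst X \<delta> \<gamma> \<sigma> \<tau>) \<rho> \<tau>) (cominor m (submat A \<delta> \<gamma>) \<rho> \<tau>) \<rho> \<tau> i (\<pi> i)) = 0"
      using i(1) by (intro prod_zero) auto
    thus ?thesis using False by simp
  qed
  have finQ: "finite (Qkm k m)"
  proof -
    have "Qkm k m \<subseteq> {xs. set xs \<subseteq> {0..<m} \<and> length xs = k}" by (auto simp: Qkm_def)
    thus ?thesis using finite_lists_length_eq[of "{0..<m}" k] by (auto intro: finite_subset)
  qed
  show ?thesis using r0Q finQ by (simp add: F0 sum.delta' cong: sum.cong)
qed

definition Phi :: "nat \<Rightarrow> (nat \<Rightarrow> nat) \<Rightarrow> nat list \<Rightarrow> nat list" where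
  "Phi k \<sigma> \<tau> = map (\<lambda>l. \<tau> ! (inv \<sigma> l)) [0..<k]"

lemma Phi_len[simp]: "length (Phi k \<sigma> \<tau>) = k" by (simp add: Phi_def)
lemma Phi_nth: "l < k \<Longrightarrow> Phi k \<sigma> \<tau> ! l = \<tau> ! (inv \<sigma> l)" by (simp add: Phi_def)

lemma Phi_props: assumes \<sigma>: "\<sigma> \<in> perms k" and \<tau>: "\<tau> \<in> Qkm k m"
  shows "set (Phi k \<sigma> \<tau>) = set \<tau>" "distinct (Phi k \<sigma> \<tau>)" "Phi k \<sigma> \<tau> \<in> Inj k m"
proof -
  have d\<tau>: "distinct \<tau>" and l\<tau>: "length \<tau> = k" and s\<tau>: "set \<tau> \<subseteq> {0..<m}" using Qkm_props[OF \<tau>] by auto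
  have pinv: "inv \<sigma> permutes {0..<k}" using \<sigma> by (simp add: perms_def permutes_inv)
  have "set (Phi k \<sigma> \<tau>) = (nth \<tau>) ` (inv \<sigma> ` {0..<k})" by (auto simp: Phi_def)
  also have "inv \<sigma> ` {0..<k} = {0..<k}" by (rule permutes_image[OF pinv])
  also have "(nth \<tau>) ` {0..<k} = set \<tau>" using l\<tau> by (auto simp: set_conv_nth)
  finally show st: "set (Phi k \<sigma> \<tau>) = set \<tau>" .
  have "card (set (Phi k \<sigma> \<tau>)) = length (Phi k \<sigma> \<tau>)" using st distinct_card[OF d\<tau>] l\<tau> by simp
  thus dP: "distinct (Phi k \<sigma> \<tau>)" by (simp add: card_distinct)
  show "Phi k \<sigma> \<tau> \<in> Inj k m" using dP st s\<tau> by (auto simp: Inj_def)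
qed

lemma map_inv_Inj: assumes \<pi>: "\<pi> \<in> perms m" and g: "g \<in> Inj k m" shows "map (inv \<pi>) g \<in> Inj k m"
proof -
  have "inj (inv \<pi>)" using perms_inj[OF perms_inv[OF \<pi>]] .
  thus ?thesis using g perms_lt[OF perms_inv[OF \<pi>]] by (auto simp: Inj_def distinct_map inj_on_subset)
qed

lemma map_Inj: assumes \<pi>: "\<pi> \<in> perms m" and g: "g \<in> Inj k m" shows "map \<pi> g \<in> Inj k m"
proof -
  have "inj \<pi>" using perms_inj[OF \<pi>] .
  thus ?thesis using g perms_lt[OF \<pi>] by (auto simp: Inj_def distinct_map inj_on_subset)
qed

lemma bij_map_inv: assumes \<pi>: "\<pi> \<in> perms m" shows "bij_betw (map (inv \<pi>)) (Inj k m) (Inj k m)"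
  by (rule bij_betw_byWitness[where f'="map \<pi>"])
     (use \<pi> map_Inj map_inv_Inj in \<open>auto simp: perms_apply_inv comp_def\<close>)

lemma Vt_hterm:
  assumes \<pi>: "\<pi> \<in> perms m" and \<sigma>: "\<sigma> \<in> perms k" and \<tau>: "\<tau> \<in> Qkm k m"
  shows "Vt m A X \<gamma> \<delta> \<pi> \<sigma> \<tau> = hterm k m A X \<gamma> \<delta> \<pi> (map (inv \<pi>) (Phi k \<sigma> \<tau>))"
proof -
  define f where "f = map (inv \<pi>) (Phi k \<sigma> \<tau>)"
  have fI: "f \<in> Inj k m" unfolding f_def by (rule map_inv_Inj[OF \<pi> Phi_props(3)[OF \<sigma> \<tau>]])
  hence df: "distinct f" and sf: "set f \<subseteq> {..<m}" and lf: "length f = k" by (auto simp: Inj_def)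
  have d\<tau>: "distinct \<tau>" and l\<tau>: "length \<tau> = k" using Qkm_props[OF \<tau>] by auto
  have setf: "set f = inv \<pi> ` set \<tau>" using Phi_props(1)[OF \<sigma> \<tau>] by (simp add: f_def)
  define g where "g i = (if \<pi> i \<in> set \<tau> then X (\<sigma> (idx \<tau> (\<pi> i)) + 1) (\<delta> ! i) (\<gamma> ! \<pi> i) else A (\<delta> ! i) (\<gamma> ! \<pi> i))" for i
  have "Vt m A X \<gamma> \<delta> \<pi> \<sigma> \<tau> = (\<Prod>i<m. g i)" by (simp add: Vt_def g_def)
  also have "\<dots> = (\<Prod>i\<in>{..<m} - set f. g i) * (\<Prod>i\<in>set f. g i)"
    by (rule prod.subset_diff[OF sf]) simp
  also have "(\<Prod>i\<in>{..<m} - set f. g i) = (\<Prod>i\<in>{..<m} - set f. A (\<delta> ! i) (\<gamma> ! \<pi> i))"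
  proof (intro prod.cong refl)
    fix i assume i: "i \<in> {..<m} - set f"
    have "\<pi> i \<notin> set \<tau>"
    proof
      assume "\<pi> i \<in> set \<tau>"
      hence "inv \<pi> (\<pi> i) \<in> set f" unfolding setf by blast
      thus False using i \<pi> by (simp add: perms_apply_inv)
    qed
    thus "g i = A (\<delta> ! i) (\<gamma> ! \<pi> i)" by (simp add: g_def)
  qed
  also have "(\<Prod>i\<in>set f. g i) = (\<Prod>l<k. g (f ! l))" using prod_set_list[OF df] lf by simp
  also have "\<dots> = (\<Prod>l<k. X (Suc l) (\<delta> ! (f ! l)) (\<gamma> ! \<pi> (f ! l)))"
  proof (intro prod.cong refl)
    fix l assume "l \<in> {..<k}"
    hence l: "l < k" by simp
    have il: "inv \<sigma> l < k" using perms_lt[OF perms_inv[OF \<sigma>] l] .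
    have pf: "\<pi> (f ! l) = \<tau> ! (inv \<sigma> l)" using l \<pi> by (simp add: f_def Phi_nth perms_apply_inv)
    have "\<tau> ! (inv \<sigma> l) \<in> set \<tau>" using il l\<tau> by simp
    moreover have "idx \<tau> (\<tau> ! (inv \<sigma> l)) = inv \<sigma> l" using idx_nth[OF d\<tau>] il l\<tau> by simp
    ultimately show "g (f ! l) = X (Suc l) (\<delta> ! (f ! l)) (\<gamma> ! \<pi> (f ! l))"
      using \<sigma> by (simp add: g_def pf perms_apply_inv)
  qed
  finally show ?thesis by (simp add: hterm_def f_def mult.commute)
qed

definition mu :: "nat \<Rightarrow> nat list \<Rightarrow> nat \<Rightarrow> nat" where
  "mu k g = (\<lambda>l. if l < k then idx (sorted_list_of_set (set g)) (g ! l) else l)"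

definition Phi_inv :: "nat \<Rightarrow> nat list \<Rightarrow> (nat \<Rightarrow> nat) \<times> nat list" where
  "Phi_inv k g = (inv (mu k g), sorted_list_of_set (set g))"

lemma sorted_set_Q: assumes g: "g \<in> Inj k m"
  shows "sorted_list_of_set (set g) \<in> Qkm k m" "set (sorted_list_of_set (set g)) = set g"
    "distinct (sorted_list_of_set (set g))" "length (sorted_list_of_set (set g)) = k"
proof -
  have dg: "distinct g" and lg: "length g = k" and sg: "set g \<subseteq> {..<m}" using g by (auto simp: Inj_def)
  show ss: "set (sorted_list_of_set (set g)) = set g" by simp
  show "distinct (sorted_list_of_set (set g))" by simp
  show ls: "length (sorted_list_of_set (set g)) = k" using distinct_card[OF dg] lg by simp
  show "sorted_list_of_set (set g) \<in> Qkm k m" using ss ls sg by (auto simp: Qkm_def)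
qed

lemma mu_permutes: assumes g: "g \<in> Inj k m" shows "mu k g permutes {0..<k}"
proof -
  let ?t = "sorted_list_of_set (set g)"
  have dg: "distinct g" and lg: "length g = k" using g by (auto simp: Inj_def)
  have dt: "distinct ?t" and lt: "length ?t = k" and st: "set ?t = set g" using sorted_set_Q[OF g] by auto
  have inmem: "g ! l \<in> set ?t" if "l < k" for l using that lg st by simp
  have maps: "mu k g ` {0..<k} \<subseteq> {0..<k}"
    using idx_in(1)[OF dt inmem] lt by (auto simp: mu_def)
  have inj: "inj_on (mu k g) {0..<k}"
  proof (rule inj_onI)
    fix a b assume a: "a \<in> {0..<k}" and b: "b \<in> {0..<k}" and e: "mu k g a = mu k g b"
    have "g ! a = ?t ! idx ?t (g ! a)" using idx_in(2)[OF dt inmem] a by simp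
    also have "\<dots> = ?t ! idx ?t (g ! b)" using e a b by (simp add: mu_def)
    also have "\<dots> = g ! b" using idx_in(2)[OF dt inmem] b by simp
    finally show "a = b" using dg a b lg nth_eq_iff_index_eq by auto
  qed
  have "mu k g ` {0..<k} = {0..<k}" by (rule endo_inj_surj[OF _ maps inj]) simp
  hence "bij_betw (mu k g) {0..<k} {0..<k}" using inj by (simp add: bij_betw_def)
  thus ?thesis by (rule bij_imp_permutes) (simp add: mu_def)
qed

lemma bij_Phi: "bij_betw (\<lambda>(\<sigma>,\<tau>). Phi k \<sigma> \<tau>) (perms k \<times> Qkm k m) (Inj k m)"
proof (rule bij_betw_byWitness[where f'="Phi_inv k"])
  show "\<forall>a\<in>perms k \<times> Qkm k m. Phi_inv k ((\<lambda>(\<sigma>,\<tau>). Phi k \<sigma> \<tau>) a) = a"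
  proof clarify
    fix \<sigma> \<tau> assume \<sigma>: "\<sigma> \<in> perms k" and \<tau>: "\<tau> \<in> Qkm k m"
    have st: "set (Phi k \<sigma> \<tau>) = set \<tau>" using Phi_props(1)[OF \<sigma> \<tau>] .
    have d\<tau>: "distinct \<tau>" and l\<tau>: "length \<tau> = k" and ss\<tau>: "sorted_wrt (<) \<tau>" using Qkm_props[OF \<tau>] by auto
    have sl: "sorted_list_of_set (set \<tau>) = \<tau>"
      using strict_sorted_equal[of \<tau> "sorted_list_of_set (set \<tau>)"] ss\<tau> by simp
    have "mu k (Phi k \<sigma> \<tau>) = inv \<sigma>"
    proof (rule ext)
      fix l
      show "mu k (Phi k \<sigma> \<tau>) l = inv \<sigma> l"
      proof (cases "l < k")
        case True
        have il: "inv \<sigma> l < k" using perms_lt[OF perms_inv[OF \<sigma>] True] .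
        show ?thesis using True il l\<tau> by (simp add: mu_def st sl Phi_nth idx_nth[OF d\<tau>])
      next
        case False
        have "inv \<sigma> l = l" using permutes_not_in[of "inv \<sigma>" "{0..<k}" l] \<sigma> False
          by (auto simp: perms_def permutes_inv)
        thus ?thesis using False by (simp add: mu_def)
      qed
    qed
    thus "Phi_inv k (Phi k \<sigma> \<tau>) = (\<sigma>, \<tau>)"
      using \<sigma> by (simp add: Phi_inv_def st sl perms_inv_inv)
  qed
next
  show "\<forall>a'\<in>Inj k m. (\<lambda>(\<sigma>,\<tau>). Phi k \<sigma> \<tau>) (Phi_inv k a') = a'"
  proof
    fix g assume g: "g \<in> Inj k m"
    let ?t = "sorted_list_of_set (set g)"
    have dt: "distinct ?t" and st: "set ?t = set g" and lg: "length g = k" using sorted_set_Q[OF g] g by (auto simp: Inj_def)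
    have pm: "mu k g permutes {0..<k}" by (rule mu_permutes[OF g])
    have "Phi k (inv (mu k g)) ?t = g"
    proof (rule nth_equalityI)
      fix l assume "l < length (Phi k (inv (mu k g)) ?t)"
      hence l: "l < k" by simp
      have "g ! l \<in> set ?t" using l lg st by simp
      thus "Phi k (inv (mu k g)) ?t ! l = g ! l"
        using l pm idx_in(2)[OF dt] by (simp add: Phi_nth permutes_inv_inv mu_def)
    qed (simp add: lg)
    thus "(\<lambda>(\<sigma>,\<tau>). Phi k \<sigma> \<tau>) (Phi_inv k g) = g" by (simp add: Phi_inv_def)
  qed
next
  show "(\<lambda>(\<sigma>,\<tau>). Phi k \<sigma> \<tau>) ` (perms k \<times> Qkm k m) \<subseteq> Inj k m"
    using Phi_props(3) by auto
next
  show "Phi_inv k ` Inj k m \<subseteq> perms k \<times> Qkm k m"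
    using sorted_set_Q(1) mu_permutes by (auto simp: Phi_inv_def perms_def permutes_inv)
qed

lemma sigma_tau_sum: assumes \<pi>: "\<pi> \<in> perms m"
  shows "(\<Sum>\<sigma>\<in>perms k. \<Sum>\<tau>\<in>Qkm k m. Vt m A X \<gamma> \<delta> \<pi> \<sigma> \<tau>) = Zs k m A X \<gamma> \<delta> \<pi>"
proof -
  let ?H = "\<lambda>g. hterm k m A X \<gamma> \<delta> \<pi> (map (inv \<pi>) g)"
  have "(\<Sum>\<sigma>\<in>perms k. \<Sum>\<tau>\<in>Qkm k m. Vt m A X \<gamma> \<delta> \<pi> \<sigma> \<tau>) = (\<Sum>\<sigma>\<in>perms k. \<Sum>\<tau>\<in>Qkm k m. ?H (Phi k \<sigma> \<tau>))"
    by (intro sum.cong refl) (simp add: Vt_hterm[OF \<pi>])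
  also have "\<dots> = (\<Sum>(\<sigma>,\<tau>)\<in>perms k \<times> Qkm k m. ?H (Phi k \<sigma> \<tau>))" by (rule sum.cartesian_product)
  also have "\<dots> = (\<Sum>x\<in>perms k \<times> Qkm k m. ?H ((\<lambda>(\<sigma>,\<tau>). Phi k \<sigma> \<tau>) x))" by (simp add: case_prod_beta)
  also have "\<dots> = (\<Sum>g\<in>Inj k m. ?H g)" by (rule sum.reindex_bij_betw[OF bij_Phi])
  also have "\<dots> = (\<Sum>f\<in>Inj k m. hterm k m A X \<gamma> \<delta> \<pi> f)" by (rule sum.reindex_bij_betw[OF bij_map_inv[OF \<pi>]])
  also have "\<dots> = Zs k m A X \<gamma> \<delta> \<pi>" by (simp add: Zs_hterm)
  finally show ?thesis .
qed

lemma second_formula: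
  "(\<Sum>\<sigma>\<in>perms k. \<Sum>\<rho>\<in>Qkm k m. \<Sum>\<tau>\<in>Qkm k m.
      imm m (cnjchar chi) (blockdsum m (subsq (Xst X \<delta> \<gamma> \<sigma> \<tau>) \<rho> \<tau>) (cominor m (submat A \<delta> \<gamma>) \<rho> \<tau>) \<rho> \<tau>))
   = (\<Sum>\<pi>\<in>perms m. cnj (chi \<pi>) * Zs k m A X \<gamma> \<delta> \<pi>)"
proof -
  let ?BD = "\<lambda>\<sigma> \<rho> \<tau>. blockdsum m (subsq (Xst X \<delta> \<gamma> \<sigma> \<tau>) \<rho> \<tau>) (cominor m (submat A \<delta> \<gamma>) \<rho> \<tau>) \<rho> \<tau>"
  have "(\<Sum>\<sigma>\<in>perms k. \<Sum>\<rho>\<in>Qkm k m. \<Sum>\<tau>\<in>Qkm k m. imm m (cnjchar chi) (?BD \<sigma> \<rho> \<tau>))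
     = (\<Sum>\<sigma>\<in>perms k. \<Sum>\<rho>\<in>Qkm k m. \<Sum>\<tau>\<in>Qkm k m. \<Sum>\<pi>\<in>perms m. cnj (chi \<pi>) * (\<Prod>i<m. ?BD \<sigma> \<rho> \<tau> i (\<pi> i)))"
    by (simp add: imm_def cnjchar_def)
  also have "\<dots> = (\<Sum>\<pi>\<in>perms m. \<Sum>\<sigma>\<in>perms k. \<Sum>\<rho>\<in>Qkm k m. \<Sum>\<tau>\<in>Qkm k m. cnj (chi \<pi>) * (\<Prod>i<m. ?BD \<sigma> \<rho> \<tau> i (\<pi> i)))"
    by (rule sum_swap4'[symmetric])
  also have "\<dots> = (\<Sum>\<pi>\<in>perms m. cnj (chi \<pi>) * Zs k m A X \<gamma> \<delta> \<pi>)"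
  proof (intro sum.cong refl)
    fix \<pi> assume \<pi>: "\<pi> \<in> perms m"
    have "(\<Sum>\<sigma>\<in>perms k. \<Sum>\<rho>\<in>Qkm k m. \<Sum>\<tau>\<in>Qkm k m. (\<Prod>i<m. ?BD \<sigma> \<rho> \<tau> i (\<pi> i)))
       = (\<Sum>\<sigma>\<in>perms k. \<Sum>\<tau>\<in>Qkm k m. \<Sum>\<rho>\<in>Qkm k m. (\<Prod>i<m. ?BD \<sigma> \<rho> \<tau> i (\<pi> i)))"
      by (rule sum.cong[OF refl], rule sum.swap)
    also have "\<dots> = (\<Sum>\<sigma>\<in>perms k. \<Sum>\<tau>\<in>Qkm k m. Vt m A X \<gamma> \<delta> \<pi> \<sigma> \<tau>)"
      by (intro sum.cong refl) (rule rho_collapse[OF \<pi>])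
    also have "\<dots> = Zs k m A X \<gamma> \<delta> \<pi>" by (rule sigma_tau_sum[OF \<pi>])
    finally show "(\<Sum>\<sigma>\<in>perms k. \<Sum>\<rho>\<in>Qkm k m. \<Sum>\<tau>\<in>Qkm k m. cnj (chi \<pi>) * (\<Prod>i<m. ?BD \<sigma> \<rho> \<tau> i (\<pi> i)))
       = cnj (chi \<pi>) * Zs k m A X \<gamma> \<delta> \<pi>" by (simp add: sum_distrib_left[symmetric])
  qed
  finally show ?thesis .
qed

theorem mainTheorem7:
  fixes m n k :: nat
    and chi :: "(nat \<Rightarrow> nat) \<Rightarrow> complex"
    and D :: "nat list set"
    and B :: "nat list \<Rightarrow> nat list \<Rightarrow> complex"
    and A :: "nat \<Rightarrow> nat \<Rightarrow> complex"
    and X :: "nat \<Rightarrow> nat \<Rightarrow> nat \<Rightarrow> complex"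
  assumes "1 \<le> m" and "1 \<le> k" and "k \<le> m"
    and "irreducible_character m chi"
    and "Deltabar m n chi \<subseteq> D" and "D \<subseteq> Omega m n chi"
    and "estar_basis m n chi D"
    and "\<forall>\<alpha>\<in>D. onb m n chi D \<alpha> = (\<lambda>x. \<Sum>\<gamma>\<in>D. B \<gamma> \<alpha> * estar m n chi \<gamma> x)"
  shows "\<forall>\<alpha>\<in>D. \<forall>\<beta>\<in>D.
     DkKchi m n chi D k A X \<alpha> \<beta>
       = chi id / of_nat (fact (m - k)) * congr D B (miximm m (cnjchar chi) k A X) \<alpha> \<beta>
   \<and> DkKchi m n chi D k A X \<alpha> \<beta>
       = chi id / of_nat (fact m) *
         (\<Sum>\<gamma>\<in>D. \<Sum>\<delta>\<in>D. B \<gamma> \<beta> * cnj (B \<delta> \<alpha>) *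
            (\<Sum>\<sigma>\<in>perms k. \<Sum>\<rho>\<in>Qkm k m. \<Sum>\<tau>\<in>Qkm k m.
               imm m (cnjchar chi)
                 (blockdsum m (subsq (Xst X \<delta> \<gamma> \<sigma> \<tau>) \<rho> \<tau>) (cominor m (submat A \<delta> \<gamma>) \<rho> \<tau>) \<rho> \<tau>)))"
proof (intro ballI conjI)
  fix \<alpha> \<beta> assume \<alpha>: "\<alpha> \<in> D" and \<beta>: "\<beta> \<in> D"
  have DG: "D \<subseteq> Gam m n" using assms(6) by (auto simp: Omega_def)
  have km: "k \<le> m" by (rule assms(3))
  define S where "S \<gamma> \<delta> = (\<Sum>\<pi>\<in>perms m. cnj (chi \<pi>) * Zs k m A X \<gamma> \<delta> \<pi>)" for \<gamma> \<delta>
  have dk: "DkKchi m n chi D k A X \<alpha> \<beta> = (\<Sum>\<gamma>\<in>D. \<Sum>\<delta>\<in>D. B \<gamma> \<beta> * cnj (B \<delta> \<alpha>) * cc m chi * S \<gamma> \<delta>)"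
    unfolding S_def by (rule DkK_formula[OF assms(4) DG \<alpha> \<beta> assms(8)])
  have "chi id / of_nat (fact (m - k)) * congr D B (miximm m (cnjchar chi) k A X) \<alpha> \<beta>
     = chi id / of_nat (fact (m - k)) * (\<Sum>\<delta>\<in>D. \<Sum>\<gamma>\<in>D. cnj (B \<delta> \<alpha>) * (fact (m - k) / fact m * S \<gamma> \<delta>) * B \<gamma> \<beta>)"
    unfolding congr_def miximm_Zs[OF km] S_def ..
  also have "\<dots> = (\<Sum>\<delta>\<in>D. \<Sum>\<gamma>\<in>D. chi id / of_nat (fact (m - k)) * (cnj (B \<delta> \<alpha>) * (fact (m - k) / fact m * S \<gamma> \<delta>) * B \<gamma> \<beta>))"
    by (simp add: sum_distrib_left)
  also have "\<dots> = (\<Sum>\<gamma>\<in>D. \<Sum>\<delta>\<in>D. chi id / of_nat (fact (m - k)) * (cnj (B \<delta> \<alpha>) * (fact (m - k) / fact m * S \<gamma> \<delta>) * B \<gamma> \<beta>))"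
    by (rule sum.swap)
  also have "\<dots> = (\<Sum>\<gamma>\<in>D. \<Sum>\<delta>\<in>D. B \<gamma> \<beta> * cnj (B \<delta> \<alpha>) * cc m chi * S \<gamma> \<delta>)"
    by (intro sum.cong refl) (simp add: cc_def field_simps)
  finally show "DkKchi m n chi D k A X \<alpha> \<beta> = chi id / of_nat (fact (m - k)) * congr D B (miximm m (cnjchar chi) k A X) \<alpha> \<beta>"
    using dk by simp
  have "chi id / of_nat (fact m) *
         (\<Sum>\<gamma>\<in>D. \<Sum>\<delta>\<in>D. B \<gamma> \<beta> * cnj (B \<delta> \<alpha>) *
            (\<Sum>\<sigma>\<in>perms k. \<Sum>\<rho>\<in>Qkm k m. \<Sum>\<tau>\<in>Qkm k m.
               imm m (cnjchar chi)
                 (blockdsum m (subsq (Xst X \<delta> \<gamma> \<sigma> \<tau>) \<rho> \<tau>) (cominor m (submat A \<delta> \<gamma>) \<rho> \<tau>) \<rho> \<tau>)))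
     = chi id / of_nat (fact m) * (\<Sum>\<gamma>\<in>D. \<Sum>\<delta>\<in>D. B \<gamma> \<beta> * cnj (B \<delta> \<alpha>) * S \<gamma> \<delta>)"
    unfolding second_formula S_def ..
  also have "\<dots> = (\<Sum>\<gamma>\<in>D. \<Sum>\<delta>\<in>D. B \<gamma> \<beta> * cnj (B \<delta> \<alpha>) * cc m chi * S \<gamma> \<delta>)"
    by (simp add: sum_distrib_left cc_def ac_simps)
  finally show "DkKchi m n chi D k A X \<alpha> \<beta> = chi id / of_nat (fact m) *
         (\<Sum>\<gamma>\<in>D. \<Sum>\<delta>\<in>D. B \<gamma> \<beta> * cnj (B \<delta> \<alpha>) *
            (\<Sum>\<sigma>\<in>perms k. \<Sum>\<rho>\<in>Qkm k m. \<Sum>\<tau>\<in>Qkm k m.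
               imm m (cnjchar chi)
                 (blockdsum m (subsq (Xst X \<delta> \<gamma> \<sigma> \<tau>) \<rho> \<tau>) (cominor m (submat A \<delta> \<gamma>) \<rho> \<tau>) \<rho> \<tau>)))"
    using dk by simp
qed

end
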